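(* $\texttt{FP} \subseteq \llbracket \mathrm{SAFE} \cap \mathrm{AP} \rrbracket$. That is, for every function $f : \mathbb{W}^k \to \mathbb{W}$ computable by a deterministic Turing machine in polynomial time, there exists a program $\mathtt{P}$ with $k$ parameters that is safe and aperiodic and satisfies $\llbracket \mathtt{P} \rrbracket = f$.
   Context: Words and values. Fix a finite alphabet $\Sigma \supseteq \{0,1\}$ and let $\mathbb{W} = \Sigma^*$. Here $\epsilon$ is the empty word, $|w|$ is the length of $w$, and $1^n$ is the word consisting of $n$ ones. A word $w$ counts as true iff $w = 1$; every other word (written $\underline{0}$) counts as false. Write $v \unlhd w$ if $v$ is a factor (subword) of $w$, i.e. $w = u v u'$ for some words $u, u'$. Operators. Fix a countable set $\mathbb{V}$ of variables and a set $\mathbb{O}$ of operators. Each $\mathsf{op} \in \mathbb{O}$ has an arity $ar(\mathsf{op})$ and a total function $\llbracket \mathsf{op} \rrbracket : \mathbb{W}^{ar(\mathsf{op})} \to \mathbb{W}$. The set $\mathbb{O}$ contains at least the following: $=, <, \le$ (comparisons in shortlex order, returning $0$ or $1$); the constant $0$; unary successor $+1$ and unary predecessor $-1$ (acting on $1^n$ and returning $\epsilon$ on words that are not of the form $1^n$); $\mathsf{not}$, $\mathsf{and}$, $\mathsf{or}$; and the usual polynomial-time word operations (e.g. head, tail, appending a character). Syntax. - Expressions: $e ::= x \mid \mathsf{op}(e_1,\dots,e_{ar(\mathsf{op})}) \mid \mathsf{declass}(e,e)$. - Statements: $s ::= \mathtt{skip} \mid x := e \mid s;s \mid \mathtt{if}(e)\{s\}\mathtt{else}\{s\}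 \mid \mathtt{while}(e)\{s\} \mid \mathtt{break}(e)$. - Programs: $\mathtt{prog}(x_1,\dots,x_k)\{s\ \mathtt{return}\ y\}$. The statement $s$ is written $\mathrm{body}(\mathtt{P})$. Semantics. - A store $\mu$ is a total map $\mathbb{V} \to \mathbb{W}$. The store $\mu_\emptyset$ maps every variable to $\epsilon$, and $\mu[x \leftarrow w]$ denotes an update. - Expressions: $x$ evaluates to $\mu(x)$; $\mathsf{op}(\bar e)$ evaluates to $\llbracket\mathsf{op}\rrbracket$ applied to the values of $\bar e$; if $e_1, e_2$ evaluate to $w_1, w_2$, then $\mathsf{declass}(e_1,e_2)$ evaluates to $1^{\min(|w_1|,|w_2|)}$. - Statements evaluate, by big-step rules, from a store to a pair $(\square,\mu')$ with flag $\square \in \{\top,\bot\}$, where $\bot$ means a break fired: - $\mathtt{skip}$ gives $(\top,\mu)$. - $x := e$ gives $(\top,\mu[x\leftarrow w])$, where $w$ is the value of $e$. - For $s_1;s_2$: if $s_1$ gives $(\bot,\mu')$, the result is $(\bot,\mu')$; if it gives $(\top,\mu')$, the result is that of $s_2$ run from $\mu'$. - $\mathtt{if}(e)\{s_1\}\mathtt{else}\{s_0\}$ runs $s_1$ if $e$ evaluates to $1$, and $s_0$ otherwise. - $\mathtt{while}(e)\{s\}$ gives $(\top,\mu)$ if $e$ evaluates to a word $\neq 1$. Otherwise it evaluates $s;\mathtt{while}(e)\{s\}$ from $\mu$ to some $(\square,\mu')$ and returns $(\top,\mu')$; thus a break exits the innermost loop. - $\mathtt{break}(e)$ gives $(\bot,\mu)$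 if $e$ evaluates to $1$, and $(\top,\mu)$ otherwise. - For a configuration $c$ (a store with an expression or a statement), $\pi_c$ is the possibly infinite evaluation (derivation) tree with root $c$. Here $\sqsubseteq$ means "is a subtree of" and $\sqsubset$ means "is a strict subtree of". - A program $\mathtt{P} = \mathtt{prog}(\bar x)\{s\ \mathtt{return}\ y\}$ computes the partial function $\llbracket \mathtt{P}\rrbracket(\bar w) = \mu'(y)$, where $(\mu_\emptyset[\bar x\leftarrow \bar w], s)$ evaluates to final store $\mu'$. For a set $S$ of programs, $\llbracket S \rrbracket = \{\llbracket \mathtt{P}\rrbracket \mid \mathtt{P} \in S\}$. Operator classes. Let $\mathsf{op}$ have arity $k$. - $\mathsf{op}$ is neutral if either $\llbracket\mathsf{op}\rrbracket$ has values in $\{0,1\}$, or there is $i \le k$ with $\llbracket\mathsf{op}\rrbracket(\bar w) \unlhd w_i$ for all $\bar w$. - $\mathsf{op}$ is positive if there is a constant $c$ with $|\llbracket\mathsf{op}\rrbracket(\bar w)| \le \max_i |w_i| + c$ for all $\bar w$. - $\mathsf{op}$ is polynomial if there is a polynomial $P$ with $|\llbracket\mathsf{op}\rrbracket(\bar w)| \le P(\max_i|w_i|)$ for all $\bar w$. - "Positive" is reserved for positive and not neutral; "polynomial" is reserved for polynomial and not positive. Typing environments. Levels are natural numbers. - A variable typing environment $\Gamma$ is a finite map $\mathbb{V} \to \mathbb{N}$. - An operator typing environment $\Delta$ maps each $\mathsf{op}$ to a map $\Delta(\mathsf{op}) : \mathbb{N}^2 \to \mathcal{P}(\mathbb{N}^{ar(\mathsf{op})+1})$.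 Tuples are written $\tau_1 \to\dots\to \tau_{k+1}$. Typing judgments. Judgments have the form $\Gamma,\Delta \vdash^{\tau_{in}}_{\tau_{out}} b : \tau$. Premises use the same $\tau_{in},\tau_{out}$ as the conclusion unless stated otherwise. The rules are: - (VAR) If $\Gamma(x)=\tau$, then $x:\tau$. - (OP) If $\tau_1\to\dots\to\tau_{k+1} \in \Delta(\mathsf{op})(\tau_{in},\tau_{out})$ and $e_i:\tau_i$ for all $i$, then $\mathsf{op}(\bar e):\tau_{k+1}$. - (DCL) If $e_1:\tau_1$, $e_2:\tau_{out}$ and $\tau_1\le\tau\le\tau_{out}$, then $\mathsf{declass}(e_1,e_2):\tau$. - (SUB) If statement $s:\tau_1$ and $\tau_1\le\tau_2$, then $s:\tau_2$. - (SKP) $\mathtt{skip}:0$. - (ASG) If $\Gamma(x)=\tau_1$, $e:\tau_2$, and ($\tau_{out}=0$ or $\tau_1\le\tau_2$), then $x:=e:\tau_1$. - (SEQ) If $s_1:\tau$ and $s_2:\tau$, then $s_1;s_2:\tau$. - (CND) If $e:\tau$, $s_1:\tau$ and $s_0:\tau$, then $\mathtt{if}(e)\{s_1\}\mathtt{else}\{s_0\}:\tau$. - (WH) If $\Gamma,\Delta\vdash^{\tau}_{\tau_{out}} e:\tau$, $\Gamma,\Delta\vdash^{\tau}_{\tau_{out}} s:\tau$ and $1\le\tau\le\tau_{out}$, then $\Gamma,\Delta\vdash^{\tau_{in}}_{\tau_{out}}\mathtt{while}(e)\{s\}:\tau$. - (WI) If $\Gamma,\Delta\vdash^{\tau}_{\tau}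 e:\tau$, $\Gamma,\Delta\vdash^{\tau}_{\tau} s:\tau$ and $1\le\tau$, then $\Gamma,\Delta\vdash^{0}_{0}\mathtt{while}(e)\{s\}:\tau$. - (BRK) If $e:\tau$ and $\tau_{in}\le\tau$, then $\mathtt{break}(e):\tau_{in}$. Safe environments and programs. - $\Delta$ is safe if every $\mathsf{op}\in dom(\Delta)$ is neutral, positive or polynomial, $\llbracket\mathsf{op}\rrbracket$ is polynomial-time computable, and for all $(\tau_{in},\tau_{out})$ and all $\tau_1\to\dots\to\tau_{k+1}\in\Delta(\mathsf{op})(\tau_{in},\tau_{out})$: - if $\mathsf{op}$ is neutral, then $\tau_{k+1}\le\min_i\tau_i$; - if $\mathsf{op}$ is positive, then $\tau_{k+1}\le\min_i\tau_i$ and ($\tau_{k+1}<\tau_{in}$ or $\tau_{k+1}=0$); - if $\mathsf{op}$ is polynomial, then $\tau_{out}=0$. - A program $\mathtt{P}$ is safe if there exist a safe $\Delta$, a $\Gamma$ and a level $\tau$ with $\Gamma,\Delta\vdash^0_0 \mathrm{body}(\mathtt{P}):\tau$. $\mathrm{SAFE}$ is the set of safe programs. Aperiodicity. - Undeclassified variables of an expression are defined by $U(x)=\{x\}$, $U(\mathsf{op}(\bar e))=\bigcup_i U(e_i)$ and $U(\mathsf{declass}(e_1,e_2))=U(e_2)$. - Stores satisfy $\mu\equiv_e\mu'$ if $\mu(x)=\mu'(x)$ for all $x\in U(e)$. - $\mathtt{P}$ is aperiodic if for no store $\mu$ are there trees $\pi_{(\mu',s')},\pi_{(\mu'',s')}\sqsubseteq\pi_{(\mu,\mathrm{body}(\mathtt{P}))}$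 with $s'=\mathtt{while}(e)\{s''\}$, $\pi_{(\mu'',s')}\sqsubset\pi_{(\mu',s')}$ and $\mu'\equiv_e\mu''$. $\mathrm{AP}$ is the set of aperiodic programs. Complexity class. $\texttt{FP}$ is the class of functions $\mathbb{W}^k\to\mathbb{W}$ computable in polynomial time. *)

theory Defs
  imports Main "HOL-Library.Sublist" "HOL-Computational_Algebra.Polynomial"
begin

text \<open>The finite alphabet Sigma is the (finite, linearly ordered) type 'a;
  it contains two distinct symbols 0 and 1. Words are lists over it.
  The linear order on symbols is used for the shortlex order.\<close>

class alphabet = finite + linorder +
  fixes sym0 :: 'a and sym1 :: 'a
  assumes sym0_neq_sym1: "sym0 \<noteq> sym1"

type_synonym 'c word = "'c list"

definition bw :: "bool \<Rightarrow> 'c::alphabet word" where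
  "bw b = (if b then [sym1] else [sym0])"

definition shortlex_less :: "'c::alphabet word \<Rightarrow> 'c word \<Rightarrow> bool" where
  "shortlex_less u v \<longleftrightarrow> length u < length v \<or>
     (length u = length v \<and> (u, v) \<in> lexord {(a, b). a < b})"

definition is_unary :: "'c::alphabet word \<Rightarrow> bool" where
  "is_unary w \<longleftrightarrow> (\<exists>n. w = replicate n sym1)"

datatype 'c operator = Operator (op_ar: nat) (op_sem: "'c list list \<Rightarrow> 'c list")

definition op_eq :: "'c::alphabet operator" where
  "op_eq = Operator 2 (\<lambda>ws. bw (ws ! 0 = ws ! 1))"
definition op_lt :: "'c::alphabet operator" where
  "op_lt = Operator 2 (\<lambda>ws. bw (shortlex_less (ws ! 0) (ws ! 1)))"
definition op_le :: "'c::alphabet operator" where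
  "op_le = Operator 2 (\<lambda>ws. bw (shortlex_less (ws ! 0) (ws ! 1) \<or> ws ! 0 = ws ! 1))"
definition op_zero :: "'c::alphabet operator" where
  "op_zero = Operator 0 (\<lambda>ws. [sym0])"
definition op_succ :: "'c::alphabet operator" where
  "op_succ = Operator 1 (\<lambda>ws. if is_unary (ws ! 0) then sym1 # ws ! 0 else [])"
definition op_pred :: "'c::alphabet operator" where
  "op_pred = Operator 1 (\<lambda>ws. if is_unary (ws ! 0) then tl (ws ! 0) else [])"
definition op_not :: "'c::alphabet operator" where
  "op_not = Operator 1 (\<lambda>ws. bw (ws ! 0 \<noteq> [sym1]))"
definition op_and :: "'c::alphabet operator" where
  "op_and = Operator 2 (\<lambda>ws. bw (ws ! 0 = [sym1] \<and> ws ! 1 = [sym1]))"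
definition op_or :: "'c::alphabet operator" where
  "op_or = Operator 2 (\<lambda>ws. bw (ws ! 0 = [sym1] \<or> ws ! 1 = [sym1]))"
definition op_head :: "'c::alphabet operator" where
  "op_head = Operator 1 (\<lambda>ws. take 1 (ws ! 0))"
definition op_tail :: "'c::alphabet operator" where
  "op_tail = Operator 1 (\<lambda>ws. tl (ws ! 0))"
definition op_cons :: "'c::alphabet \<Rightarrow> 'c operator" where
  "op_cons c = Operator 1 (\<lambda>ws. c # ws ! 0)"

definition required_ops :: "'c::alphabet operator set" where
  "required_ops = {op_eq, op_lt, op_le, op_zero, op_succ, op_pred, op_not, op_and, op_or,
                   op_head, op_tail} \<union> range op_cons"

section \<open>Polynomial-time computability (deterministic single-tape Turing machines)\<close>

datatype 'c tsym = Blank | Sep | Sym 'c | Aux nat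
datatype dir = Left | Right | Stay

text \<open>States are 0..<tm_nstates; 0 is the start state, 1 the halting state.
  Auxiliary tape symbols are Aux i with i < tm_naux.\<close>
record 'c tm =
  tm_nstates :: nat
  tm_naux :: nat
  tm_delta :: "nat \<Rightarrow> 'c tsym \<Rightarrow> nat \<times> 'c tsym \<times> dir"

definition tm_valid_sym :: "'c tm \<Rightarrow> 'c tsym \<Rightarrow> bool" where
  "tm_valid_sym M a = (case a of Aux i \<Rightarrow> i < tm_naux M | _ \<Rightarrow> True)"

definition tm_wf :: "'c tm \<Rightarrow> bool" where
  "tm_wf M \<longleftrightarrow> 2 \<le> tm_nstates M \<and>
     (\<forall>q a. q < tm_nstates M \<and> tm_valid_sym M a \<longrightarrow>
        fst (tm_delta M q a) < tm_nstates M \<and> tm_valid_sym M (fst (snd (tm_delta M q a))))"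

type_synonym 'c tconf = "nat \<times> (int \<Rightarrow> 'c tsym) \<times> int"

definition dir_off :: "dir \<Rightarrow> int" where
  "dir_off d = (case d of Left \<Rightarrow> -1 | Right \<Rightarrow> 1 | Stay \<Rightarrow> 0)"

definition tm_step :: "'c tm \<Rightarrow> 'c tconf \<Rightarrow> 'c tconf" where
  "tm_step M c = (case c of (q, tp, h) \<Rightarrow>
     if q = 1 then (q, tp, h)
     else (case tm_delta M q (tp h) of (q', a, d) \<Rightarrow> (q', tp(h := a), h + dir_off d)))"

definition tm_input :: "'c word list \<Rightarrow> 'c tsym list" where
  "tm_input ws = concat (map (\<lambda>w. map Sym w @ [Sep]) ws)"

definition tm_init :: "'c word list \<Rightarrow> 'c tconf" where
  "tm_init ws = (0, (\<lambda>i. if 0 \<le> i \<and> i < int (length (tm_input ws))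
                          then tm_input ws ! nat i else Blank), 0)"

definition is_Sym :: "'c tsym \<Rightarrow> bool" where
  "is_Sym a = (case a of Sym _ \<Rightarrow> True | _ \<Rightarrow> False)"

definition the_Sym :: "'c tsym \<Rightarrow> 'c" where
  "the_Sym a = (case a of Sym c \<Rightarrow> c | _ \<Rightarrow> undefined)"

definition tm_output :: "'c tconf \<Rightarrow> 'c word" where
  "tm_output c = (case c of (q, tp, h) \<Rightarrow>
     map (\<lambda>i. the_Sym (tp (h + int i))) [0..<(LEAST n. \<not> is_Sym (tp (h + int n)))])"

definition poly_time_computable :: "nat \<Rightarrow> ('c word list \<Rightarrow> 'c word) \<Rightarrow> bool" where
  "poly_time_computable k f \<longleftrightarrow>
     (\<exists>(M::'c tm) (p::nat poly). tm_wf M \<and>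
        (\<forall>ws. length ws = k \<longrightarrow>
           (\<exists>t. t \<le> poly p (sum_list (map length ws)) \<and>
                fst ((tm_step M ^^ t) (tm_init ws)) = 1 \<and>
                tm_output ((tm_step M ^^ t) (tm_init ws)) = f ws)))"

definition FP :: "(nat \<times> ('c word list \<Rightarrow> 'c word)) set" where
  "FP = {(k, f). poly_time_computable k f}"

definition maxlen :: "'c word list \<Rightarrow> nat" where
  "maxlen ws = foldr max (map length ws) 0"

definition neutral_op :: "'c::alphabet operator \<Rightarrow> bool" where
  "neutral_op op \<longleftrightarrow>
     (\<forall>ws. length ws = op_ar op \<longrightarrow> op_sem op ws \<in> {[sym0], [sym1]}) \<or>
     (\<exists>i < op_ar op. \<forall>ws. length ws = op_ar op \<longrightarrow> sublist (op_sem op ws) (ws ! i))"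

definition positive_op :: "'c operator \<Rightarrow> bool" where
  "positive_op op \<longleftrightarrow>
     (\<exists>c. \<forall>ws. length ws = op_ar op \<longrightarrow> length (op_sem op ws) \<le> maxlen ws + c)"

definition polynomial_op :: "'c operator \<Rightarrow> bool" where
  "polynomial_op op \<longleftrightarrow>
     (\<exists>P :: nat poly. \<forall>ws. length ws = op_ar op \<longrightarrow> length (op_sem op ws) \<le> poly P (maxlen ws))"

type_synonym var = nat

datatype 'c expr = Var var | Op "'c operator" "'c expr list" | Declass "'c expr" "'c expr"

datatype 'c stmt = Skip | Assign var "'c expr" | Seq "'c stmt" "'c stmt"
  | If "'c expr" "'c stmt" "'c stmt" | While "'c expr" "'c stmt" | Break "'c expr"

record 'c prog =
  params :: "var list"
  body :: "'c stmt"
  ret :: var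

section \<open>Semantics\<close>

type_synonym 'c store = "var \<Rightarrow> 'c word"

fun eval_e :: "'c::alphabet store \<Rightarrow> 'c expr \<Rightarrow> 'c word" where
  "eval_e \<mu> (Var x) = \<mu> x"
| "eval_e \<mu> (Op op es) = op_sem op (map (eval_e \<mu>) es)"
| "eval_e \<mu> (Declass e1 e2) =
     replicate (min (length (eval_e \<mu> e1)) (length (eval_e \<mu> e2))) sym1"

text \<open>Big-step semantics; the flag True is top, False is bot (a break fired).\<close>
inductive eval_s :: "'c::alphabet store \<Rightarrow> 'c stmt \<Rightarrow> bool \<Rightarrow> 'c store \<Rightarrow> bool" where
  ESkip: "eval_s \<mu> Skip True \<mu>"
| EAssign: "eval_s \<mu> (Assign x e) True (\<mu>(x := eval_e \<mu> e))"
| ESeqBrk: "eval_s \<mu> s1 False \<mu>' \<Longrightarrow> eval_s \<mu> (Seq s1 s2) False \<mu>'"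
| ESeq: "eval_s \<mu> s1 True \<mu>' \<Longrightarrow> eval_s \<mu>' s2 b \<mu>'' \<Longrightarrow> eval_s \<mu> (Seq s1 s2) b \<mu>''"
| EIfT: "eval_e \<mu> e = [sym1] \<Longrightarrow> eval_s \<mu> s1 b \<mu>' \<Longrightarrow> eval_s \<mu> (If e s1 s0) b \<mu>'"
| EIfF: "eval_e \<mu> e \<noteq> [sym1] \<Longrightarrow> eval_s \<mu> s0 b \<mu>' \<Longrightarrow> eval_s \<mu> (If e s1 s0) b \<mu>'"
| EWhileF: "eval_e \<mu> e \<noteq> [sym1] \<Longrightarrow> eval_s \<mu> (While e s) True \<mu>"
| EWhileT: "eval_e \<mu> e = [sym1] \<Longrightarrow> eval_s \<mu> (Seq s (While e s)) b \<mu>' \<Longrightarrow>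
             eval_s \<mu> (While e s) True \<mu>'"
| EBreakT: "eval_e \<mu> e = [sym1] \<Longrightarrow> eval_s \<mu> (Break e) False \<mu>"
| EBreakF: "eval_e \<mu> e \<noteq> [sym1] \<Longrightarrow> eval_s \<mu> (Break e) True \<mu>"

definition store_empty :: "'c::alphabet store" where
  "store_empty = (\<lambda>x. [])"

definition init_store :: "var list \<Rightarrow> 'c::alphabet word list \<Rightarrow> 'c store" where
  "init_store xs ws = foldl (\<lambda>\<mu> (x, w). \<mu>(x := w)) store_empty (zip xs ws)"

text \<open>The program P computes w on input ws (i.e. [[P]](ws) = w).\<close>
definition prog_computes :: "'c::alphabet prog \<Rightarrow> 'c word list \<Rightarrow> 'c word \<Rightarrow> bool" where
  "prog_computes P ws w \<longleftrightarrow>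
     (\<exists>b \<mu>'. eval_s (init_store (params P) ws) (body P) b \<mu>' \<and> \<mu>' (ret P) = w)"

text \<open>Child relation between statement configurations in the (possibly infinite)
  evaluation tree (expression nodes, which never contain loops, are omitted).\<close>
inductive child :: "('c::alphabet store \<times> 'c stmt) \<Rightarrow> ('c store \<times> 'c stmt) \<Rightarrow> bool" where
  CSeq1: "child (\<mu>, Seq s1 s2) (\<mu>, s1)"
| CSeq2: "eval_s \<mu> s1 True \<mu>' \<Longrightarrow> child (\<mu>, Seq s1 s2) (\<mu>', s2)"
| CIfT: "eval_e \<mu> e = [sym1] \<Longrightarrow> child (\<mu>, If e s1 s0) (\<mu>, s1)"
| CIfF: "eval_e \<mu> e \<noteq> [sym1] \<Longrightarrow> child (\<mu>, If e s1 s0) (\<mu>, s0)"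
| CWhile: "eval_e \<mu> e = [sym1] \<Longrightarrow> child (\<mu>, While e s) (\<mu>, Seq s (While e s))"

section \<open>Typing\<close>

type_synonym 'c op_env = "'c operator \<Rightarrow> (nat \<Rightarrow> nat \<Rightarrow> nat list set) option"
type_synonym var_env = "var \<Rightarrow> nat option"

inductive etype :: "var_env \<Rightarrow> 'c op_env \<Rightarrow> nat \<Rightarrow> nat \<Rightarrow> 'c expr \<Rightarrow> nat \<Rightarrow> bool" where
  TVar: "\<Gamma> x = Some \<tau> \<Longrightarrow> etype \<Gamma> \<Delta> ti to (Var x) \<tau>"
| TOp: "\<Delta> op = Some D \<Longrightarrow> ts \<in> D ti to \<Longrightarrow> length es = op_ar op \<Longrightarrow>
        length ts = Suc (length es) \<Longrightarrow>
        (\<forall>i < length es. etype \<Gamma> \<Delta> ti to (es ! i) (ts ! i)) \<Longrightarrow>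
        etype \<Gamma> \<Delta> ti to (Op op es) (last ts)"
| TDcl: "etype \<Gamma> \<Delta> ti to e1 \<tau>1 \<Longrightarrow> etype \<Gamma> \<Delta> ti to e2 to \<Longrightarrow> \<tau>1 \<le> \<tau> \<Longrightarrow> \<tau> \<le> to \<Longrightarrow>
        etype \<Gamma> \<Delta> ti to (Declass e1 e2) \<tau>"

inductive stype :: "var_env \<Rightarrow> 'c op_env \<Rightarrow> nat \<Rightarrow> nat \<Rightarrow> 'c stmt \<Rightarrow> nat \<Rightarrow> bool" where
  TSub: "stype \<Gamma> \<Delta> ti to s \<tau>1 \<Longrightarrow> \<tau>1 \<le> \<tau>2 \<Longrightarrow> stype \<Gamma> \<Delta> ti to s \<tau>2"
| TSkip: "stype \<Gamma> \<Delta> ti to Skip 0"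
| TAsg: "\<Gamma> x = Some \<tau>1 \<Longrightarrow> etype \<Gamma> \<Delta> ti to e \<tau>2 \<Longrightarrow> (to = 0 \<or> \<tau>1 \<le> \<tau>2) \<Longrightarrow>
         stype \<Gamma> \<Delta> ti to (Assign x e) \<tau>1"
| TSeq: "stype \<Gamma> \<Delta> ti to s1 \<tau> \<Longrightarrow> stype \<Gamma> \<Delta> ti to s2 \<tau> \<Longrightarrow> stype \<Gamma> \<Delta> ti to (Seq s1 s2) \<tau>"
| TCnd: "etype \<Gamma> \<Delta> ti to e \<tau> \<Longrightarrow> stype \<Gamma> \<Delta> ti to s1 \<tau> \<Longrightarrow> stype \<Gamma> \<Delta> ti to s0 \<tau> \<Longrightarrow>
         stype \<Gamma> \<Delta> ti to (If e s1 s0) \<tau>"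
| TWh: "etype \<Gamma> \<Delta> \<tau> to e \<tau> \<Longrightarrow> stype \<Gamma> \<Delta> \<tau> to s \<tau> \<Longrightarrow> 1 \<le> \<tau> \<Longrightarrow> \<tau> \<le> to \<Longrightarrow>
        stype \<Gamma> \<Delta> ti to (While e s) \<tau>"
| TWi: "etype \<Gamma> \<Delta> \<tau> \<tau> e \<tau> \<Longrightarrow> stype \<Gamma> \<Delta> \<tau> \<tau> s \<tau> \<Longrightarrow> 1 \<le> \<tau> \<Longrightarrow>
        stype \<Gamma> \<Delta> 0 0 (While e s) \<tau>"
| TBrk: "etype \<Gamma> \<Delta> ti to e \<tau> \<Longrightarrow> ti \<le> \<tau> \<Longrightarrow> stype \<Gamma> \<Delta> ti to (Break e) ti"

definition safe_env :: "'c::alphabet operator set \<Rightarrow> 'c op_env \<Rightarrow> bool" where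
  "safe_env Ops \<Delta> \<longleftrightarrow>
     (\<forall>op D. \<Delta> op = Some D \<longrightarrow>
        op \<in> Ops \<and>
        (neutral_op op \<or> positive_op op \<or> polynomial_op op) \<and>
        poly_time_computable (op_ar op) (op_sem op) \<and>
        (\<forall>ti to ts. ts \<in> D ti to \<longrightarrow>
           length ts = Suc (op_ar op) \<and>
           (neutral_op op \<longrightarrow> (\<forall>i < op_ar op. last ts \<le> ts ! i)) \<and>
           (positive_op op \<and> \<not> neutral_op op \<longrightarrow>
              (\<forall>i < op_ar op. last ts \<le> ts ! i) \<and> (last ts < ti \<or> last ts = 0)) \<and>
           (polynomial_op op \<and> \<not> positive_op op \<longrightarrow> to = 0)))"

definition safe_prog :: "'c::alphabet operator set \<Rightarrow> 'c prog \<Rightarrow> bool" where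
  "safe_prog Ops P \<longleftrightarrow>
     (\<exists>\<Delta> \<Gamma> \<tau>. safe_env Ops \<Delta> \<and> finite (dom \<Gamma>) \<and> stype \<Gamma> \<Delta> 0 0 (body P) \<tau>)"

fun undecl :: "'c expr \<Rightarrow> var set" where
  "undecl (Var x) = {x}"
| "undecl (Op op es) = (\<Union>e \<in> set es. undecl e)"
| "undecl (Declass e1 e2) = undecl e2"

definition aperiodic :: "'c::alphabet prog \<Rightarrow> bool" where
  "aperiodic P \<longleftrightarrow>
     \<not> (\<exists>\<mu> \<mu>' \<mu>'' e s.
          child\<^sup>*\<^sup>* (\<mu>, body P) (\<mu>', While e s) \<and>
          child\<^sup>+\<^sup>+ (\<mu>', While e s) (\<mu>'', While e s) \<and>
          (\<forall>x \<in> undecl e. \<mu>' x = \<mu>'' x))"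

end

theory Submission
  imports Defs
begin


section \<open>Loop-free execution\<close>

fun simple :: "'c stmt \<Rightarrow> bool" where
  "simple Skip = True"
| "simple (Assign x e) = True"
| "simple (Seq s1 s2) = (simple s1 \<and> simple s2)"
| "simple (If e s1 s0) = (simple s1 \<and> simple s0)"
| "simple (While e s) = False"
| "simple (Break e) = False"

fun sexec :: "'c::alphabet store \<Rightarrow> 'c stmt \<Rightarrow> 'c store" where
  "sexec \<mu> Skip = \<mu>"
| "sexec \<mu> (Assign x e) = \<mu>(x := eval_e \<mu> e)"
| "sexec \<mu> (Seq s1 s2) = sexec (sexec \<mu> s1) s2"
| "sexec \<mu> (If e s1 s0) = (if eval_e \<mu> e = [sym1] then sexec \<mu> s1 else sexec \<mu> s0)"
| "sexec \<mu> (While e s) = \<mu>"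
| "sexec \<mu> (Break e) = \<mu>"

lemma sexec_sound: "simple s \<Longrightarrow> eval_s \<mu> s True (sexec \<mu> s)"
  by (induction s arbitrary: \<mu>) (auto intro: eval_s.intros)

fun evars :: "'c expr \<Rightarrow> var set" where
  "evars (Var x) = {x}"
| "evars (Op op es) = (\<Union>e \<in> set es. evars e)"
| "evars (Declass e1 e2) = evars e1 \<union> evars e2"

fun svars :: "'c stmt \<Rightarrow> var set" where
  "svars Skip = {}"
| "svars (Assign x e) = insert x (evars e)"
| "svars (Seq s1 s2) = svars s1 \<union> svars s2"
| "svars (If e s1 s0) = evars e \<union> svars s1 \<union> svars s0"
| "svars (While e s) = evars e \<union> svars s"
| "svars (Break e) = evars e"

fun mods :: "'c stmt \<Rightarrow> var set" where
  "mods Skip = {}"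
| "mods (Assign x e) = {x}"
| "mods (Seq s1 s2) = mods s1 \<union> mods s2"
| "mods (If e s1 s0) = mods s1 \<union> mods s0"
| "mods (While e s) = mods s"
| "mods (Break e) = {}"

lemma eval_e_agree: "(\<forall>x\<in>evars e. \<mu>1 x = \<mu>2 x) \<Longrightarrow> eval_e \<mu>1 e = eval_e \<mu>2 e"
proof (induction e)
  case (Op op es)
  have "map (eval_e \<mu>1) es = map (eval_e \<mu>2) es"
    by (rule map_cong) (use Op in auto)
  then show ?case by (simp only: eval_e.simps)
qed auto

definition eq_off :: "var set \<Rightarrow> 'c store \<Rightarrow> 'c store \<Rightarrow> bool" where
  "eq_off C \<mu>1 \<mu>2 \<longleftrightarrow> (\<forall>x. x \<notin> C \<longrightarrow> \<mu>1 x = \<mu>2 x)"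

lemma eq_off_refl[simp]: "eq_off C \<mu> \<mu>" by (simp add: eq_off_def)
lemma eq_off_sym: "eq_off C a b \<Longrightarrow> eq_off C b a" by (simp add: eq_off_def)
lemma eq_off_trans: "eq_off C a b \<Longrightarrow> eq_off C b c \<Longrightarrow> eq_off C a c" by (simp add: eq_off_def)
lemma eq_off_upd: "x \<in> C \<Longrightarrow> eq_off C a b \<Longrightarrow> eq_off C (a(x:=w)) b" by (simp add: eq_off_def)

lemma sexec_agree:
  "svars s \<inter> C = {} \<Longrightarrow> eq_off C \<mu>1 \<mu>2 \<Longrightarrow> eq_off C (sexec \<mu>1 s) (sexec \<mu>2 s)"
proof (induction s arbitrary: \<mu>1 \<mu>2)
  case (Assign x e)
  then have "eval_e \<mu>1 e = eval_e \<mu>2 e"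
    by (intro eval_e_agree) (auto simp: eq_off_def)
  with Assign show ?case by (auto simp: eq_off_def)
next
  case (If e s1 s0)
  then have "eval_e \<mu>1 e = eval_e \<mu>2 e"
    by (intro eval_e_agree) (auto simp: eq_off_def)
  with If show ?case by (simp add: Int_Un_distrib2)
qed (auto simp: Int_Un_distrib2)

lemma sexec_frame: "x \<notin> mods s \<Longrightarrow> sexec \<mu> s x = \<mu> x"
  by (induction s arbitrary: \<mu>) auto

lemma eval_s_frame: "eval_s \<mu> s b \<mu>' \<Longrightarrow> x \<notin> mods s \<Longrightarrow> \<mu>' x = \<mu> x"
  by (induction rule: eval_s.induct) auto

lemma funpow_sexec_agree:
  "svars s \<inter> C = {} \<Longrightarrow> eq_off C \<mu>1 \<mu>2 \<Longrightarrow>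
   eq_off C (((\<lambda>\<mu>. sexec \<mu> s)^^n) \<mu>1) (((\<lambda>\<mu>. sexec \<mu> s)^^n) \<mu>2)"
  by (induction n) (auto intro: sexec_agree)

lemma funpow_sexec_frame:
  "x \<notin> mods s \<Longrightarrow> (((\<lambda>\<mu>. sexec \<mu> s)^^n) \<mu>) x = \<mu> x"
  by (induction n) (auto simp: sexec_frame)

lemma bw_eq1[simp]: "(bw b = [sym1]) = b"
  using sym0_neq_sym1 by (auto simp: bw_def)

lemma bw_eq0[simp]: "(bw b = [sym0]) = (\<not> b)"
  using sym0_neq_sym1 by (auto simp: bw_def dest: sym)

definition ZERO :: "'c::alphabet expr" where "ZERO = Op op_zero []"
definition TRUE :: "'c::alphabet expr" where "TRUE = Op op_eq [ZERO, ZERO]"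
definition EPS :: "'c::alphabet expr" where "EPS = Op op_tail [ZERO]"
definition EQ :: "'c::alphabet expr \<Rightarrow> 'c expr \<Rightarrow> 'c expr" where "EQ a b = Op op_eq [a, b]"
definition HD :: "'c::alphabet expr \<Rightarrow> 'c expr" where "HD a = Op op_head [a]"
definition TL :: "'c::alphabet expr \<Rightarrow> 'c expr" where "TL a = Op op_tail [a]"
definition CONS :: "'c::alphabet \<Rightarrow> 'c expr \<Rightarrow> 'c expr" where "CONS c a = Op (op_cons c) [a]"

lemma eval_ZERO[simp]: "eval_e \<mu> ZERO = [sym0]" by (simp add: ZERO_def op_zero_def)
lemma eval_TRUE[simp]: "eval_e \<mu> TRUE = [sym1]" by (simp add: TRUE_def op_eq_def)
lemma eval_EPS[simp]: "eval_e \<mu> EPS = []" by (simp add: EPS_def op_tail_def)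
lemma eval_EQ[simp]: "eval_e \<mu> (EQ a b) = bw (eval_e \<mu> a = eval_e \<mu> b)" by (simp add: EQ_def op_eq_def)
lemma eval_HD[simp]: "eval_e \<mu> (HD a) = take 1 (eval_e \<mu> a)" by (simp add: HD_def op_head_def)
lemma eval_TL[simp]: "eval_e \<mu> (TL a) = tl (eval_e \<mu> a)" by (simp add: TL_def op_tail_def)
lemma eval_CONS[simp]: "eval_e \<mu> (CONS c a) = c # eval_e \<mu> a" by (simp add: CONS_def op_cons_def)

definition PUSH :: "'c::alphabet list \<Rightarrow> 'c expr \<Rightarrow> 'c expr" where
  "PUSH u e = foldr CONS u e"
lemma eval_PUSH[simp]: "eval_e \<mu> (PUSH u e) = u @ eval_e \<mu> e"
  by (induction u) (auto simp: PUSH_def)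

definition CST :: "'c::alphabet list \<Rightarrow> 'c expr" where "CST u = PUSH u EPS"
lemma eval_CST[simp]: "eval_e \<mu> (CST u) = u" by (simp add: CST_def)

definition TLN :: "nat \<Rightarrow> 'c::alphabet expr \<Rightarrow> 'c expr" where "TLN n e = (TL ^^ n) e"
lemma eval_TLN[simp]: "eval_e \<mu> (TLN n e) = drop n (eval_e \<mu> e)"
  by (induction n) (auto simp: TLN_def drop_Suc tl_drop)

lemma evars_simps[simp]:
  "evars (ZERO::'c::alphabet expr) = {}" "evars (TRUE::'c expr) = {}" "evars (EPS::'c expr) = {}"
  "evars (EQ a b) = evars a \<union> evars b" "evars (HD a) = evars a" "evars (TL a) = evars a"
  "evars (CONS c a) = evars a"
  by (auto simp: ZERO_def TRUE_def EPS_def EQ_def HD_def TL_def CONS_def)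

lemma evars_PUSH[simp]: "evars (PUSH u e) = evars e"
  by (induction u) (auto simp: PUSH_def)
lemma evars_CST[simp]: "evars (CST u :: 'c::alphabet expr) = {}" by (simp add: CST_def)
lemma evars_TLN[simp]: "evars (TLN n e) = evars e"
  by (induction n) (auto simp: TLN_def)


lemmas sym01[simp] = sym0_neq_sym1 sym0_neq_sym1[symmetric]

lemma bw_True[simp]: "bw True = [sym1]" and bw_False[simp]: "bw False = [sym0]"
  by (auto simp: bw_def)

definition GUARD :: "var \<Rightarrow> var \<Rightarrow> 'c::alphabet expr" where
  "GUARD c d = EQ (EQ (Var d) (EQ (Var c) (Var c))) ZERO"

lemma eval_GUARD[simp]: "eval_e \<mu> (GUARD c d) = bw (\<mu> d \<noteq> [sym1])"
  by (simp add: GUARD_def)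

definition UPD :: "var \<Rightarrow> var \<Rightarrow> 'c::alphabet stmt" where
  "UPD c d = If (EQ (Var c) EPS) (Assign d TRUE) (Assign c (TL (Var c)))"

definition loopc :: "var \<Rightarrow> var \<Rightarrow> 'c::alphabet stmt \<Rightarrow> 'c stmt" where
  "loopc c d S = While (GUARD c d) (Seq S (UPD c d))"

lemma funpow_resp:
  fixes G :: "'c store \<Rightarrow> 'c store"
  assumes "\<And>a b. eq_off C a b \<Longrightarrow> eq_off C (G a) (G b)" and "eq_off C a b"
  shows "eq_off C ((G^^n) a) ((G^^n) b)"
proof (induction n)
  case 0 show ?case using assms(2) by simp
next
  case (Suc n) show ?case using assms(1)[OF Suc.IH] by simp
qed

lemma loop_impl:
  assumes cd: "c \<in> C" "d \<in> C" "c \<noteq> d" "c \<notin> mods S" "d \<notin> mods S"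
    and S: "\<And>\<mu>. \<exists>\<mu>'. eval_s \<mu> S True \<mu>' \<and> eq_off C \<mu>' (G \<mu>)"
    and Gresp: "\<And>a b. eq_off C a b \<Longrightarrow> eq_off C (G a) (G b)"
  shows "\<mu> d \<noteq> [sym1] \<Longrightarrow>
    \<exists>\<mu>'. eval_s \<mu> (loopc c d S) True \<mu>' \<and> eq_off C \<mu>' ((G^^(Suc (length (\<mu> c)))) \<mu>)"
proof (induction "length (\<mu> c)" arbitrary: \<mu>)
  case 0
  obtain \<mu>a where a: "eval_s \<mu> S True \<mu>a" "eq_off C \<mu>a (G \<mu>)" using S by blast
  have ac: "\<mu>a c = \<mu> c" "\<mu>a d = \<mu> d" using eval_s_frame[OF a(1)] cd by auto
  have c0: "\<mu> c = []" using 0 by simp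
  let ?\<mu>b = "\<mu>a(d := [sym1])"
  have u0: "eval_s \<mu>a (Assign d TRUE) True (\<mu>a(d := eval_e \<mu>a TRUE))" by (rule EAssign)
  have u: "eval_s \<mu>a (UPD c d) True ?\<mu>b"
    unfolding UPD_def using ac c0 u0 by (auto intro!: EIfT)
  have w: "eval_s ?\<mu>b (loopc c d S) True ?\<mu>b"
    unfolding loopc_def by (rule EWhileF) simp
  have "eval_s \<mu> (loopc c d S) True ?\<mu>b"
    unfolding loopc_def
    apply (rule EWhileT)
    using 0 apply simp
    apply (rule ESeq[OF ESeq[OF a(1) u]])
    using w unfolding loopc_def .
  moreover have "eq_off C ?\<mu>b ((G^^(Suc (length (\<mu> c)))) \<mu>)"
    using a(2) c0 cd by (auto intro: eq_off_upd)
  ultimately show ?case by blast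
next
  case (Suc n)
  obtain \<mu>a where a: "eval_s \<mu> S True \<mu>a" "eq_off C \<mu>a (G \<mu>)" using S by blast
  have ac: "\<mu>a c = \<mu> c" "\<mu>a d = \<mu> d" using eval_s_frame[OF a(1)] cd by auto
  have c0: "\<mu> c \<noteq> []" using Suc by auto
  let ?\<mu>b = "\<mu>a(c := tl (\<mu>a c))"
  have u0: "eval_s \<mu>a (Assign c (TL (Var c))) True (\<mu>a(c := eval_e \<mu>a (TL (Var c))))" by (rule EAssign)
  have u: "eval_s \<mu>a (UPD c d) True ?\<mu>b"
    unfolding UPD_def using ac c0 u0 by (auto intro!: EIfF)
  have lb: "length (?\<mu>b c) = n" using Suc(2) ac by simp
  have db: "?\<mu>b d \<noteq> [sym1]" using Suc(3) ac cd by simp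
  have IH: "\<exists>\<mu>'. eval_s ?\<mu>b (loopc c d S) True \<mu>' \<and> eq_off C \<mu>' ((G^^(Suc (length (?\<mu>b c)))) ?\<mu>b)"
    using Suc(1)[OF lb[symmetric] db] .
  then obtain \<mu>' where m': "eval_s ?\<mu>b (loopc c d S) True \<mu>'"
     "eq_off C \<mu>' ((G^^(Suc n)) ?\<mu>b)"
    unfolding lb by blast
  have "eval_s \<mu> (loopc c d S) True \<mu>'"
    unfolding loopc_def
    apply (rule EWhileT)
    using Suc apply simp
    apply (rule ESeq[OF ESeq[OF a(1) u]])
    using m'(1) unfolding loopc_def .
  moreover have "eq_off C ?\<mu>b (G \<mu>)" using a(2) cd by (auto intro: eq_off_upd)
  then have "eq_off C ((G^^(Suc n)) ?\<mu>b) ((G^^(Suc n)) (G \<mu>))"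
    using funpow_resp[of C G, OF Gresp] by blast
  then have "eq_off C \<mu>' ((G^^(Suc (length (\<mu> c)))) \<mu>)"
    using m'(2) Suc(2) by (metis eq_off_trans funpow_Suc_right o_apply)
  ultimately show ?case by blast
qed

fun nest :: "(nat \<Rightarrow> var) \<Rightarrow> (nat \<Rightarrow> var) \<Rightarrow> (nat \<Rightarrow> var) \<Rightarrow> nat list \<Rightarrow> 'c::alphabet stmt \<Rightarrow> 'c stmt" where
  "nest cv dv inp [] S = S"
| "nest cv dv inp (i # js) S =
     Seq (Assign (cv (length js)) (Var (inp i)))
       (Seq (Assign (dv (length js)) ZERO) (loopc (cv (length js)) (dv (length js)) (nest cv dv inp js S)))"

lemma mods_loopc[simp]: "mods (loopc c d S) = mods S \<union> {c, d}"
  by (auto simp: loopc_def UPD_def)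

lemma mods_nest: "mods (nest cv dv inp js S) \<subseteq> mods S \<union> cv ` {..<length js} \<union> dv ` {..<length js}"
  by (induction js) auto

lemma funpow_cnt:
  assumes "\<And>\<mu>. cnt (F \<mu>) = cnt \<mu>"
  shows "((\<lambda>\<mu>. (F^^(cnt \<mu>)) \<mu>)^^a) \<mu> = (F^^(a * cnt \<mu>)) \<mu>"
proof -
  have inv: "cnt ((F^^m) \<mu>) = cnt \<mu>" for m \<mu> by (induction m) (auto simp: assms)
  show ?thesis
  proof (induction a)
    case (Suc a)
    have "((\<lambda>\<mu>. (F^^(cnt \<mu>)) \<mu>)^^(Suc a)) \<mu> = (F^^(cnt ((F^^(a * cnt \<mu>)) \<mu>))) ((F^^(a * cnt \<mu>)) \<mu>)"
      using Suc by simp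
    also have "\<dots> = (F^^(Suc a * cnt \<mu>)) \<mu>" by (simp add: inv funpow_add add.commute)
    finally show ?case .
  qed simp
qed

lemma nest_impl:
  assumes C: "range cv \<subseteq> C" "range dv \<subseteq> C" "inj cv" "inj dv" "\<And>l l'. cv l \<noteq> dv l'"
    and inpC: "\<And>j. j \<in> set js \<Longrightarrow> inp j \<notin> C"
    and modsS: "mods S \<inter> C = {}"
    and S: "\<And>\<mu>. \<exists>\<mu>'. eval_s \<mu> S True \<mu>' \<and> eq_off C \<mu>' ((F^^R) \<mu>)"
    and Fresp: "\<And>a b. eq_off C a b \<Longrightarrow> eq_off C (F a) (F b)"
    and Finp: "\<And>\<mu> j. j \<in> set js \<Longrightarrow> F \<mu> (inp j) = \<mu> (inp j)"
  shows "\<exists>\<mu>'. eval_s \<mu> (nest cv dv inp js S) True \<mu>' \<and>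
           eq_off C \<mu>' ((F^^(R * prod_list (map (\<lambda>j. Suc (length (\<mu> (inp j)))) js))) \<mu>)"
  using inpC Finp
proof (induction js arbitrary: \<mu>)
  case Nil
  then show ?case using S by simp
next
  case (Cons i js)
  let ?l = "length js"
  let ?cnt = "\<lambda>\<mu>. R * prod_list (map (\<lambda>j. Suc (length (\<mu> (inp j)))) js)"
  define G where "G = (\<lambda>\<mu>. (F^^(?cnt \<mu>)) \<mu>)"
  have FnC: "eq_off C a b \<Longrightarrow> eq_off C ((F^^n) a) ((F^^n) b)" for a b n
    by (rule funpow_resp[OF Fresp])
  have cnt_off: "eq_off C a b \<Longrightarrow> ?cnt a = ?cnt b" for a b
  proof -
    assume "eq_off C a b"
    then have "\<forall>j\<in>set js. a (inp j) = b (inp j)" using Cons.prems(1) by (auto simp: eq_off_def)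
    then have "map (\<lambda>j. Suc (length (a (inp j)))) js = map (\<lambda>j. Suc (length (b (inp j)))) js"
      by auto
    then show ?thesis by metis
  qed
  have Gresp: "eq_off C a b \<Longrightarrow> eq_off C (G a) (G b)" for a b
  proof -
    assume ab: "eq_off C a b"
    have "?cnt a = ?cnt b" by (rule cnt_off[OF ab])
    then show ?thesis unfolding G_def using FnC[OF ab] by metis
  qed
  have Sin: "\<exists>\<mu>'. eval_s \<mu> (nest cv dv inp js S) True \<mu>' \<and> eq_off C \<mu>' (G \<mu>)" for \<mu>
    using Cons by (simp add: G_def)
  have mn: "cv ?l \<notin> mods (nest cv dv inp js S)" "dv ?l \<notin> mods (nest cv dv inp js S)"
  proof -
    have "cv ?l \<notin> cv ` {..<?l}" "dv ?l \<notin> dv ` {..<?l}" "cv ?l \<notin> dv ` {..<?l}" "dv ?l \<notin> cv ` {..<?l}"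
      using C(3,4,5) by (auto dest: injD) (metis C(5))
    moreover have "cv ?l \<notin> mods S" "dv ?l \<notin> mods S" using modsS C(1,2) by blast+
    ultimately show "cv ?l \<notin> mods (nest cv dv inp js S)" "dv ?l \<notin> mods (nest cv dv inp js S)"
      using mods_nest[of cv dv inp js S] by auto
  qed
  define \<mu>1 where "\<mu>1 = \<mu>(cv ?l := \<mu> (inp i), dv ?l := [sym0])"
  have d1: "\<mu>1 (dv ?l) \<noteq> [sym1]" using sym0_neq_sym1 by (simp add: \<mu>1_def)
  obtain \<mu>' where L: "eval_s \<mu>1 (loopc (cv ?l) (dv ?l) (nest cv dv inp js S)) True \<mu>'"
     "eq_off C \<mu>' ((G^^(Suc (length (\<mu>1 (cv ?l))))) \<mu>1)"
  proof -
    have "\<exists>\<mu>'. eval_s \<mu>1 (loopc (cv ?l) (dv ?l) (nest cv dv inp js S)) True \<mu>' \<and>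
       eq_off C \<mu>' ((G^^(Suc (length (\<mu>1 (cv ?l))))) \<mu>1)"
      apply (rule loop_impl[of "cv ?l" C "dv ?l" "nest cv dv inp js S" G])
      using C apply blast
      using C apply blast
      using C(5) apply blast
      using mn apply blast
      using mn apply blast
      using Sin apply blast
      using Gresp apply blast
      using d1 apply blast
      done
    then show ?thesis using that by blast
  qed
  have ev: "eval_s \<mu> (nest cv dv inp (i # js) S) True \<mu>'"
    using L(1) by (auto simp: \<mu>1_def ZERO_def op_zero_def intro!: eval_s.intros)
  have off1: "eq_off C \<mu>1 \<mu>" using C by (auto simp: \<mu>1_def eq_off_def)
  have cF: "?cnt (F \<mu>) = ?cnt \<mu>" for \<mu>
  proof -
    have "map (\<lambda>j. Suc (length (F \<mu> (inp j)))) js = map (\<lambda>j. Suc (length (\<mu> (inp j)))) js"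
      using Cons.prems(2) by auto
    then show ?thesis by metis
  qed
  have "(G^^(Suc (length (\<mu>1 (cv ?l))))) \<mu>1 = (F^^(Suc (length (\<mu>1 (cv ?l))) * ?cnt \<mu>1)) \<mu>1"
    unfolding G_def by (rule funpow_cnt[where cnt="?cnt" and F=F, OF cF])
  also have "Suc (length (\<mu>1 (cv ?l))) * ?cnt \<mu>1 =
      R * prod_list (map (\<lambda>j. Suc (length (\<mu> (inp j)))) (i # js))"
  proof -
    have e1: "?cnt \<mu>1 = ?cnt \<mu>" by (rule cnt_off[OF off1])
    have e2: "\<mu>1 (cv ?l) = \<mu> (inp i)" using C(5) by (simp add: \<mu>1_def)
    show ?thesis unfolding e1 e2 by (simp add: algebra_simps)
  qed
  finally have "eq_off C \<mu>' ((F^^(R * prod_list (map (\<lambda>j. Suc (length (\<mu> (inp j)))) (i # js)))) \<mu>1)"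
    using L(2) by simp
  then have "eq_off C \<mu>' ((F^^(R * prod_list (map (\<lambda>j. Suc (length (\<mu> (inp j)))) (i # js)))) \<mu>)"
    using FnC[OF off1] eq_off_trans by blast
  with ev show ?case by blast
qed


fun subs :: "'c stmt \<Rightarrow> 'c stmt set" where
  "subs (Seq a b) = insert (Seq a b) (subs a \<union> subs b)"
| "subs (If e a b) = insert (If e a b) (subs a \<union> subs b)"
| "subs (While e b) = insert (While e b) (subs b)"
| "subs s = {s}"

lemma subs_refl[simp]: "s \<in> subs s" by (cases s) auto

lemma subs_trans: "t \<in> subs s \<Longrightarrow> u \<in> subs t \<Longrightarrow> u \<in> subs s"
  by (induction s) auto

lemma subs_size: "t \<in> subs s \<Longrightarrow> size t \<le> size s"
  by (induction s) auto

definition cl :: "'c stmt \<Rightarrow> 'c stmt set" where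
  "cl s = subs s \<union> {Seq b (While e b) | e b. While e b \<in> subs s}"

lemma child_cl:
  assumes "child p1 p2" "snd p1 \<in> cl s" shows "snd p2 \<in> cl s"
  using assms
proof (induction rule: child.induct)
  case (CSeq1 \<mu> s1 s2)
  then show ?case unfolding cl_def using subs_trans[of "Seq s1 s2" s s1]
    by (auto intro: subs_trans[of "While _ s1" s s1])
next
  case (CSeq2 \<mu> s1 \<mu>' s2)
  then show ?case unfolding cl_def using subs_trans[of "Seq s1 s2" s s2] by auto
next
  case (CIfT \<mu> e s1 s0)
  then show ?case unfolding cl_def using subs_trans[of "If e s1 s0" s s1] by auto
next
  case (CIfF \<mu> e s1 s0)
  then show ?case unfolding cl_def using subs_trans[of "If e s1 s0" s s0] by auto
next
  case (CWhile \<mu> e s')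
  then show ?case unfolding cl_def by auto
qed

lemma rtranclp_cl: "child\<^sup>*\<^sup>* p1 p2 \<Longrightarrow> snd p1 \<in> cl s \<Longrightarrow> snd p2 \<in> cl s"
  by (induction rule: rtranclp_induct) (auto intro: child_cl)

lemma while_not_cl: "While e b \<notin> cl b" "Seq b (While e b) \<notin> cl b"
proof -
  have nw: "While e b \<notin> subs b" using subs_size[of "While e b" b] by auto
  then show "While e b \<notin> cl b" unfolding cl_def by auto
  have "Seq b (While e b) \<notin> subs b" using subs_size[of "Seq b (While e b)" b] by auto
  then show "Seq b (While e b) \<notin> cl b" using nw unfolding cl_def by auto
qed

lemma cl_refl[simp]: "s \<in> cl s" by (simp add: cl_def)

definition meas :: "var \<Rightarrow> var \<Rightarrow> 'c::alphabet store \<Rightarrow> nat" where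
  "meas c d \<mu> = (if \<mu> d = [sym1] then 0 else Suc (length (\<mu> c)))"

lemma body_dec:
  assumes "eval_s \<mu> (Seq S (UPD c d)) True \<mu>'" "\<mu> d \<noteq> [sym1]"
    "c \<notin> mods S" "d \<notin> mods S" "c \<noteq> d"
  shows "meas c d \<mu>' < meas c d \<mu>"
proof -
  from assms(1) obtain \<mu>a where a: "eval_s \<mu> S True \<mu>a" "eval_s \<mu>a (UPD c d) True \<mu>'"
    by (cases rule: eval_s.cases) auto
  have ac: "\<mu>a c = \<mu> c" "\<mu>a d = \<mu> d" using eval_s_frame[OF a(1)] assms by auto
  show ?thesis
  proof (cases "\<mu> c = []")
    case True
    from a(2) have "\<mu>' = \<mu>a(d := [sym1])" unfolding UPD_def
      using True ac by (auto elim!: eval_s.cases)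
    then show ?thesis using assms(2) by (simp add: meas_def)
  next
    case False
    from a(2) have "\<mu>' = \<mu>a(c := tl (\<mu>a c))" unfolding UPD_def
      using False ac by (auto elim!: eval_s.cases)
    then show ?thesis using assms(2,5) ac False by (simp add: meas_def)
  qed
qed

lemma loop_path:
  assumes "child\<^sup>+\<^sup>+ p1 p2" "p1 = (\<mu>1, loopc c d S)"
    "c \<notin> mods S" "d \<notin> mods S" "c \<noteq> d"
  shows "(snd p2 = loopc c d S \<and> meas c d (fst p2) < meas c d \<mu>1) \<or>
         (snd p2 = Seq (Seq S (UPD c d)) (loopc c d S) \<and> fst p2 d \<noteq> [sym1] \<and>
            meas c d (fst p2) \<le> meas c d \<mu>1) \<or>
         snd p2 \<in> cl (Seq S (UPD c d))"
  using assms(1)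
proof (induction rule: tranclp_induct)
  case (base y)
  then show ?case using assms(2) unfolding loopc_def
    by (cases rule: child.cases) (auto simp: meas_def)
next
  case (step y z)
  let ?b = "Seq S (UPD c d)"
  from step.IH show ?case
  proof (elim disjE conjE)
    assume y: "snd y = loopc c d S" "meas c d (fst y) < meas c d \<mu>1"
    from step.hyps(2) y show ?thesis unfolding loopc_def
      by (cases rule: child.cases) (auto simp: meas_def)
  next
    assume y: "snd y = Seq ?b (loopc c d S)" "fst y d \<noteq> [sym1]" "meas c d (fst y) \<le> meas c d \<mu>1"
    from step.hyps(2) y show ?thesis
    proof (cases rule: child.cases)
      case (CSeq2 \<mu> s1 \<mu>' s2)
      then have "meas c d \<mu>' < meas c d \<mu>"
        using body_dec[of \<mu> S c d \<mu>'] assms(3-5) y by auto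
      then show ?thesis using CSeq2 y by auto
    qed auto
  next
    assume "snd y \<in> cl ?b"
    then show ?thesis using child_cl[OF step.hyps(2)] by auto
  qed
qed

definition goodW :: "'c::alphabet stmt \<Rightarrow> bool" where
  "goodW s \<longleftrightarrow> (\<forall>e b. While e b \<in> subs s \<longrightarrow>
      (\<exists>c d S. c \<noteq> d \<and> c \<notin> mods S \<and> d \<notin> mods S \<and> While e b = loopc c d S))"

lemma goodW_aperiodic:
  assumes "goodW (body P)" shows "aperiodic P"
  unfolding aperiodic_def
proof (intro notI, elim exE conjE)
  fix \<mu> \<mu>' \<mu>'' e s
  assume r: "child\<^sup>*\<^sup>* (\<mu>, body P) (\<mu>', While e s)"
    and t: "child\<^sup>+\<^sup>+ (\<mu>', While e s) (\<mu>'', While e s)"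
    and ag: "\<forall>x\<in>undecl e. \<mu>' x = \<mu>'' x"
  have "While e s \<in> cl (body P)"
    using rtranclp_cl[OF r, of "body P"] by (simp add: cl_def)
  then have "While e s \<in> subs (body P)" unfolding cl_def by auto
  then obtain c d S where cd: "c \<noteq> d" "c \<notin> mods S" "d \<notin> mods S" "While e s = loopc c d S"
    using assms unfolding goodW_def by blast
  have W: "e = GUARD c d" "s = Seq S (UPD c d)" using cd(4) by (auto simp: loopc_def)
  have "meas c d \<mu>'' < meas c d \<mu>'"
    using loop_path[OF t _ cd(2,3,1)] cd(4) while_not_cl[where e="GUARD c d" and b="Seq S (UPD c d)"]
    unfolding loopc_def by auto
  moreover have "\<mu>' c = \<mu>'' c" "\<mu>' d = \<mu>'' d"
    using ag W(1) by (auto simp: GUARD_def EQ_def ZERO_def)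
  ultimately show False by (simp add: meas_def split: if_splits)
qed


definition Used :: "'c::alphabet operator set" where
  "Used = {op_zero, op_tail, op_head, op_eq} \<union> range op_cons"

definition NUsed :: "'c::alphabet operator set" where
  "NUsed = {op_eq, op_zero, op_tail}"

definition Dlt :: "'c::alphabet op_env" where
  "Dlt op = (if op \<in> Used then Some (\<lambda>ti to. {ts. length ts = Suc (op_ar op) \<and>
       (\<forall>i<op_ar op. last ts \<le> ts ! i) \<and> (last ts = 0 \<or> op \<in> NUsed)}) else None)"

fun wfe :: "var_env \<Rightarrow> 'c::alphabet expr \<Rightarrow> bool" where
  "wfe \<Gamma> (Var x) = (x \<in> dom \<Gamma>)"
| "wfe \<Gamma> (Op op es) = (op \<in> Used \<and> length es = op_ar op \<and> (\<forall>e\<in>set es. wfe \<Gamma> e))"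
| "wfe \<Gamma> (Declass a b) = False"

fun ntype :: "var_env \<Rightarrow> 'c expr \<Rightarrow> nat" where
  "ntype \<Gamma> (Var x) = the (\<Gamma> x)"
| "ntype \<Gamma> _ = 0"

lemma wfe_etype: "wfe \<Gamma> e \<Longrightarrow> etype \<Gamma> Dlt ti to e (ntype \<Gamma> e)"
proof (induction e)
  case (Var x)
  then show ?case by (auto intro: etype.intros)
next
  case (Op op es)
  let ?ts = "map (ntype \<Gamma>) es @ [0]"
  have "etype \<Gamma> Dlt ti to (Op op es) (last ?ts)"
    apply (rule TOp[where D="\<lambda>ti to. {ts. length ts = Suc (op_ar op) \<and>
       (\<forall>i<op_ar op. last ts \<le> ts ! i) \<and> (last ts = 0 \<or> op \<in> NUsed)}"])
    using Op.prems apply (simp add: Dlt_def)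
    using Op by (auto simp: nth_append)
  then show ?case by simp
qed simp

lemma nth_Cons_replicate[simp]: "i \<le> n \<Longrightarrow> (\<tau> # replicate n \<tau>) ! i = \<tau>"
  by (cases i) auto

lemma N_etype:
  assumes "op \<in> NUsed" "length es = op_ar op" "\<forall>i<length es. etype \<Gamma> Dlt ti to (es ! i) \<tau>"
  shows "etype \<Gamma> Dlt ti to (Op op es) \<tau>"
proof -
  have "etype \<Gamma> Dlt ti to (Op op es) (last (replicate (Suc (length es)) \<tau>))"
    apply (rule TOp[where D="\<lambda>ti to. {ts. length ts = Suc (op_ar op) \<and>
       (\<forall>i<op_ar op. last ts \<le> ts ! i) \<and> (last ts = 0 \<or> op \<in> NUsed)}"])
    using assms by (auto simp: Dlt_def NUsed_def Used_def)
  then show ?thesis by (cases "es = []") (auto simp: last_replicate)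
qed

lemma etype1:
  assumes "\<Gamma> c = Some 1" "\<Gamma> d = Some 1"
  shows "etype \<Gamma> Dlt ti to (ZERO::'c::alphabet expr) 1"
    "etype \<Gamma> Dlt ti to (TRUE::'c::alphabet expr) 1"
    "etype \<Gamma> Dlt ti to (EPS::'c::alphabet expr) 1"
    "etype \<Gamma> Dlt ti to (TL (Var c)::'c::alphabet expr) 1"
    "etype \<Gamma> Dlt ti to (GUARD c d::'c::alphabet expr) 1"
    "etype \<Gamma> Dlt ti to (EQ (Var c) EPS::'c::alphabet expr) 1"
proof -
  have z: "etype \<Gamma> Dlt ti to (ZERO::'c::alphabet expr) 1"
    unfolding ZERO_def by (rule N_etype) (auto simp: NUsed_def op_zero_def)
  show "etype \<Gamma> Dlt ti to (ZERO::'c::alphabet expr) 1" by (fact z)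
  show "etype \<Gamma> Dlt ti to (TRUE::'c::alphabet expr) 1"
    unfolding TRUE_def using z by (intro N_etype) (auto simp: NUsed_def op_eq_def less_Suc_eq)
  have e: "etype \<Gamma> Dlt ti to (EPS::'c::alphabet expr) 1"
    unfolding EPS_def using z by (intro N_etype) (auto simp: NUsed_def op_tail_def)
  show "etype \<Gamma> Dlt ti to (EPS::'c::alphabet expr) 1" by (fact e)
  have vc: "etype \<Gamma> Dlt ti to (Var c :: 'c expr) 1" "etype \<Gamma> Dlt ti to (Var d :: 'c expr) 1"
    using assms by (auto intro: TVar)
  show "etype \<Gamma> Dlt ti to (TL (Var c)::'c::alphabet expr) 1"
    unfolding TL_def using vc by (intro N_etype) (auto simp: NUsed_def op_tail_def)
  show "etype \<Gamma> Dlt ti to (EQ (Var c) EPS::'c::alphabet expr) 1"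
    unfolding EQ_def using vc e by (intro N_etype) (auto simp: NUsed_def op_eq_def less_Suc_eq)
  have cc: "etype \<Gamma> Dlt ti to (EQ (Var c) (Var c)::'c::alphabet expr) 1"
    unfolding EQ_def using vc by (intro N_etype) (auto simp: NUsed_def op_eq_def less_Suc_eq)
  have dcc: "etype \<Gamma> Dlt ti to (EQ (Var d) (EQ (Var c) (Var c))::'c::alphabet expr) 1"
    unfolding EQ_def using vc cc by (intro N_etype) (auto simp: NUsed_def op_eq_def less_Suc_eq EQ_def)
  show "etype \<Gamma> Dlt ti to (GUARD c d::'c::alphabet expr) 1"
    unfolding GUARD_def EQ_def using dcc z
    by (intro N_etype) (auto simp: NUsed_def op_eq_def less_Suc_eq EQ_def)
qed

fun is_op :: "'c expr \<Rightarrow> bool" where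
  "is_op (Op op es) = True"
| "is_op _ = False"

fun wfs :: "var_env \<Rightarrow> 'c::alphabet stmt \<Rightarrow> bool" where
  "wfs \<Gamma> Skip = True"
| "wfs \<Gamma> (Assign x e) = (\<Gamma> x = Some 0 \<and> wfe \<Gamma> e)"
| "wfs \<Gamma> (Seq a b) = (wfs \<Gamma> a \<and> wfs \<Gamma> b)"
| "wfs \<Gamma> (If e a b) = (wfe \<Gamma> e \<and> is_op e \<and> wfs \<Gamma> a \<and> wfs \<Gamma> b)"
| "wfs \<Gamma> (While e b) = False"
| "wfs \<Gamma> (Break e) = False"

lemma wfs_stype0: "wfs \<Gamma> s \<Longrightarrow> stype \<Gamma> Dlt ti to s 0"
proof (induction s)
  case Skip then show ?case by (auto intro: stype.intros)
next
  case (Assign x e) then show ?case by (auto intro!: TAsg wfe_etype)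
next
  case (Seq a b) then show ?case by (auto intro: stype.intros)
next
  case (If e a b)
  then have "etype \<Gamma> Dlt ti to e 0" using wfe_etype[of \<Gamma> e ti to] by (cases e) auto
  with If show ?case by (auto intro: TCnd)
qed auto

lemma wfs_stype: "wfs \<Gamma> s \<Longrightarrow> stype \<Gamma> Dlt ti to s 1"
  using wfs_stype0 TSub by fastforce

lemma stype_loopc:
  assumes "\<Gamma> c = Some 1" "\<Gamma> d = Some 1" "stype \<Gamma> Dlt 1 1 S 1" "t \<le> 1"
  shows "stype \<Gamma> Dlt t t (loopc c d (S::'c::alphabet stmt)) 1"
proof -
  note E = etype1[OF assms(1,2), where 'c='c]
  have upd: "stype \<Gamma> Dlt 1 1 (UPD c d :: 'c stmt) 1"
    unfolding UPD_def using assms E by (auto intro!: TCnd TAsg)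
  have b: "stype \<Gamma> Dlt 1 1 (Seq S (UPD c d)) 1" using upd assms by (auto intro: TSeq)
  show ?thesis
  proof (cases "t = 0")
    case True
    then show ?thesis unfolding loopc_def using b E by (auto intro: TWi)
  next
    case False
    then have "t = 1" using assms by auto
    then show ?thesis unfolding loopc_def using b E by (auto intro: TWh)
  qed
qed

lemma stype_nest:
  assumes "\<And>l. l < length js \<Longrightarrow> \<Gamma> (cv l) = Some 1 \<and> \<Gamma> (dv l) = Some 1"
    "\<And>j. j \<in> set js \<Longrightarrow> \<Gamma> (inp j) = Some 1"
    "\<And>t. t \<le> 1 \<Longrightarrow> stype \<Gamma> Dlt t t S 1" "t \<le> 1"
  shows "stype \<Gamma> Dlt t t (nest cv dv inp js (S::'c::alphabet stmt)) 1"
  using assms(1,2,4)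
proof (induction js arbitrary: t)
  case Nil then show ?case using assms(3) by simp
next
  case (Cons i js)
  let ?l = "length js"
  have g: "\<Gamma> (cv ?l) = Some 1" "\<Gamma> (dv ?l) = Some 1" "\<Gamma> (inp i) = Some 1" using Cons.prems by auto
  have inner: "stype \<Gamma> Dlt 1 1 (nest cv dv inp js S) 1" using Cons by auto
  have a1: "stype \<Gamma> Dlt t t (Assign (cv ?l) (Var (inp i)) :: 'c stmt) 1"
    using g by (auto intro!: TAsg TVar)
  have a2: "stype \<Gamma> Dlt t t (Assign (dv ?l) ZERO :: 'c stmt) 1"
    using g etype1(1)[OF g(1,2)] by (auto intro!: TAsg)
  have lp: "stype \<Gamma> Dlt t t (loopc (cv ?l) (dv ?l) (nest cv dv inp js S)) 1"
    using stype_loopc[OF g(1,2) inner Cons.prems(3)] .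
  show ?case using a1 a2 lp by (auto intro: TSeq)
qed

lemma maxlen_ge: "i < length ws \<Longrightarrow> length (ws ! i) \<le> maxlen ws"
proof (induction ws arbitrary: i)
  case (Cons w ws)
  then show ?case by (cases i) (auto simp: maxlen_def le_max_iff_disj)
qed simp

lemma len_bw[simp]: "length (bw b) = 1" by (simp add: bw_def)

lemma Used_positive:
  fixes op :: "'c::alphabet operator"
  shows "op \<in> Used \<Longrightarrow> positive_op op"
proof -
  assume u: "op \<in> Used"
  have m0: "length ws = Suc 0 \<Longrightarrow> length (ws ! 0) \<le> maxlen ws" for ws :: "'c list list"
    by (rule maxlen_ge) simp
  show ?thesis
    unfolding positive_op_def
  proof (rule exI[of _ 1], intro allI impI)
    fix ws :: "'c list list" assume l: "length ws = op_ar op"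
    show "length (op_sem op ws) \<le> maxlen ws + 1"
      using u l m0[of ws]
      unfolding Used_def op_zero_def op_tail_def op_head_def op_eq_def op_cons_def
      by auto
  qed
qed

lemma NUsed_neutral: "op \<in> NUsed \<Longrightarrow> neutral_op op"
proof -
  assume "op \<in> NUsed"
  then consider "op = op_eq" | "op = op_zero" | "op = op_tail" by (auto simp: NUsed_def)
  then show ?thesis
  proof cases
    case 1 then show ?thesis unfolding neutral_op_def op_eq_def by (simp add: bw_def)
  next
    case 2 then show ?thesis unfolding neutral_op_def op_zero_def by simp
  next
    case 3
    have "sublist (tl w) w" for w :: "'a list" unfolding sublist_altdef' by (intro exI[of _ "tl w"]) simp
    then show ?thesis using 3 unfolding neutral_op_def op_tail_def by simp
  qed
qed

lemma safe_Dlt: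
  assumes "required_ops \<subseteq> Ops"
    and "\<And>op. op \<in> (Used :: 'c::alphabet operator set) \<Longrightarrow> poly_time_computable (op_ar op) (op_sem op)"
  shows "safe_env Ops (Dlt :: 'c op_env)"
  unfolding safe_env_def
proof (intro allI impI)
  fix op :: "'c operator" and D :: "nat \<Rightarrow> nat \<Rightarrow> nat list set"
  assume "Dlt op = Some D"
  then have u: "op \<in> Used" and D: "D = (\<lambda>ti to. {ts. length ts = Suc (op_ar op) \<and>
       (\<forall>i<op_ar op. last ts \<le> ts ! i) \<and> (last ts = 0 \<or> op \<in> NUsed)})"
    by (auto simp: Dlt_def split: if_splits)
  have "op \<in> Ops" using u assms(1) by (auto simp: Used_def required_ops_def)
  moreover have "positive_op op" using Used_positive[OF u] .
  moreover note assms(2)[OF u]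
  moreover have "op \<in> NUsed \<Longrightarrow> neutral_op op" by (rule NUsed_neutral)
  ultimately show "op \<in> Ops \<and> (neutral_op op \<or> positive_op op \<or> polynomial_op op) \<and>
     poly_time_computable (op_ar op) (op_sem op) \<and>
     (\<forall>ti to ts. ts \<in> D ti to \<longrightarrow> length ts = Suc (op_ar op) \<and>
        (neutral_op op \<longrightarrow> (\<forall>i<op_ar op. last ts \<le> ts ! i)) \<and>
        (positive_op op \<and> \<not> neutral_op op \<longrightarrow>
           (\<forall>i<op_ar op. last ts \<le> ts ! i) \<and> (last ts < ti \<or> last ts = 0)) \<and>
        (polynomial_op op \<and> \<not> positive_op op \<longrightarrow> to = 0))"
    unfolding D by auto
qed


section \<open>Match combinators\<close>

fun MIF :: "'c::alphabet list \<Rightarrow> var \<Rightarrow> nat \<Rightarrow> 'c stmt \<Rightarrow> 'c stmt \<Rightarrow> 'c stmt" where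
  "MIF [] v i act els = act"
| "MIF (x # u) v i act els = If (EQ (HD (TLN i (Var v))) (CST [x])) (MIF u v (Suc i) act els) els"

lemma take1_drop: "take (Suc 0) (drop i w) = [x] \<longleftrightarrow> (i < length w \<and> w ! i = x)"
proof (cases "i < length w")
  case True
  then have "drop i w = w ! i # drop (Suc i) w" by (rule Cons_nth_drop_Suc[symmetric])
  then show ?thesis using True by simp
next
  case False then show ?thesis by simp
qed

lemma prefix_drop_Cons: "prefix (x # u) (drop i w) \<longleftrightarrow> i < length w \<and> w ! i = x \<and> prefix u (drop (Suc i) w)"
proof (cases "i < length w")
  case True
  then have "drop i w = w ! i # drop (Suc i) w" by (rule Cons_nth_drop_Suc[symmetric])
  then show ?thesis using True by auto
next
  case False then show ?thesis by simp
qed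

lemma sexec_MIF:
  "sexec \<mu> (MIF u v i act els) = (if prefix u (drop i (\<mu> v)) then sexec \<mu> act else sexec \<mu> els)"
proof (induction u arbitrary: i)
  case (Cons x u)
  have "sexec \<mu> (MIF (x # u) v i act els) =
     (if take (Suc 0) (drop i (\<mu> v)) = [x] then sexec \<mu> (MIF u v (Suc i) act els) else sexec \<mu> els)"
    by simp
  also have "\<dots> = (if prefix (x # u) (drop i (\<mu> v)) then sexec \<mu> act else sexec \<mu> els)"
    unfolding Cons.IH take1_drop prefix_drop_Cons by simp
  finally show ?case .
qed simp

fun CH :: "('c::alphabet list \<times> var \<times> 'c stmt) list \<Rightarrow> 'c stmt \<Rightarrow> 'c stmt" where
  "CH [] d = d"
| "CH ((u, v, a) # rest) d = MIF u v 0 a (CH rest d)"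

lemma sexec_CH_Cons: "sexec \<mu> (CH ((u, v, a) # rest) d) =
   (if prefix u (\<mu> v) then sexec \<mu> a else sexec \<mu> (CH rest d))"
  by (simp add: sexec_MIF)

declare CH.simps(2)[simp del]

lemma sexec_CH_map_none:
  "(\<And>x. x \<in> set xs \<Longrightarrow> \<not> prefix (f x) (\<mu> v)) \<Longrightarrow>
   sexec \<mu> (CH (map (\<lambda>x. (f x, v, g x)) xs) d) = sexec \<mu> d"
proof (induction xs)
  case (Cons a xs) then show ?case by (simp add: sexec_CH_Cons)
qed simp

lemma sexec_CH_map_hit:
  assumes "y \<in> set xs" "prefix (f y) (\<mu> v)" "\<And>x. x \<in> set xs \<Longrightarrow> prefix (f x) (\<mu> v) \<Longrightarrow> x = y"
  shows "sexec \<mu> (CH (map (\<lambda>x. (f x, v, g x)) xs) d) = sexec \<mu> (g y)"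
  using assms
proof (induction xs)
  case (Cons a xs)
  show ?case
  proof (cases "prefix (f a) (\<mu> v)")
    case True
    then have "a = y" using Cons.prems(3)[of a] by simp
    then show ?thesis using True by (simp add: sexec_CH_Cons)
  next
    case False
    then have y: "y \<in> set xs" using Cons.prems(1,2) by auto
    have "sexec \<mu> (CH (map (\<lambda>x. (f x, v, g x)) xs) d) = sexec \<mu> (g y)"
      using Cons.IH[OF y Cons.prems(2)] Cons.prems(3) by simp
    then show ?thesis using False by (simp add: sexec_CH_Cons)
  qed
qed simp

lemma simple_MIF: "simple act \<Longrightarrow> simple els \<Longrightarrow> simple (MIF u v i act els)"
  by (induction u arbitrary: i) auto
lemma simple_CH: "(\<forall>(u,v,a)\<in>set xs. simple a) \<Longrightarrow> simple d \<Longrightarrow> simple (CH xs d)"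
  by (induction xs d rule: CH.induct) (auto intro: simple_MIF simp: CH.simps)

lemma svars_MIF: "svars (MIF u v i act els) \<subseteq> insert v (svars act \<union> svars els)"
  by (induction u arbitrary: i) (auto simp: EQ_def HD_def)
lemma svars_CH: "svars (CH xs d) \<subseteq> (\<Union>(u,v,a)\<in>set xs. insert v (svars a)) \<union> svars d"
  by (induction xs d rule: CH.induct) (use svars_MIF in \<open>fastforce simp: CH.simps\<close>)+

lemma mods_MIF: "mods (MIF u v i act els) \<subseteq> mods act \<union> mods els"
  by (induction u arbitrary: i) auto
lemma mods_CH: "mods (CH xs d) \<subseteq> (\<Union>(u,v,a)\<in>set xs. mods a) \<union> mods d"
  by (induction xs d rule: CH.induct) (use mods_MIF in \<open>fastforce simp: CH.simps\<close>)+

lemma wfe_simps[simp]: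
  "wfe \<Gamma> (ZERO :: 'c::alphabet expr)" "wfe \<Gamma> (EPS :: 'c::alphabet expr)" "wfe \<Gamma> (TRUE :: 'c::alphabet expr)"
  "wfe \<Gamma> (EQ a b) = (wfe \<Gamma> a \<and> wfe \<Gamma> b)" "wfe \<Gamma> (HD a) = wfe \<Gamma> a"
  "wfe \<Gamma> (TL a) = wfe \<Gamma> a" "wfe \<Gamma> (CONS c a) = wfe \<Gamma> a"
  by (auto simp: ZERO_def EPS_def TRUE_def EQ_def HD_def TL_def CONS_def Used_def
     op_zero_def op_tail_def op_eq_def op_head_def op_cons_def)

lemma wfe_PUSH[simp]: "wfe \<Gamma> (PUSH u e) = wfe \<Gamma> e"
  by (induction u) (auto simp: PUSH_def)
lemma wfe_CST[simp]: "wfe \<Gamma> (CST u :: 'c::alphabet expr)" by (simp add: CST_def)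
lemma wfe_TLN[simp]: "wfe \<Gamma> (TLN n e) = wfe \<Gamma> e"
  by (induction n) (auto simp: TLN_def)

lemma is_op_EQ[simp]: "is_op (EQ a b)" by (simp add: EQ_def)

lemma wfs_MIF: "wfs \<Gamma> act \<Longrightarrow> wfs \<Gamma> els \<Longrightarrow> v \<in> dom \<Gamma> \<Longrightarrow> wfs \<Gamma> (MIF u v i act els)"
  by (induction u arbitrary: i) auto
lemma wfs_CH: "(\<forall>(u,v,a)\<in>set xs. wfs \<Gamma> a \<and> v \<in> dom \<Gamma>) \<Longrightarrow> wfs \<Gamma> d \<Longrightarrow> wfs \<Gamma> (CH xs d)"
  by (induction xs d rule: CH.induct) (auto intro: wfs_MIF simp: CH.simps)

section \<open>Tape symbol encoding\<close>

fun ncode :: "'c tsym \<Rightarrow> nat" where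
  "ncode Blank = 0" | "ncode Sep = 1" | "ncode (Aux i) = Suc (Suc i)" | "ncode (Sym c) = 0"

definition enc :: "'c::alphabet tsym \<Rightarrow> 'c list" where
  "enc a = (case a of Sym c \<Rightarrow> [sym0, c] | _ \<Rightarrow> replicate (Suc (ncode a)) sym1 @ [sym0])"

lemma enc_Sym[simp]: "enc (Sym c) = [sym0, c]" by (simp add: enc_def)

definition encl :: "'c::alphabet tsym list \<Rightarrow> 'c list" where
  "encl xs = concat (map enc xs)"

lemma encl_simps[simp]: "encl [] = []" "encl (a # xs) = enc a @ encl xs"
  "encl (xs @ ys) = encl xs @ encl ys"
  by (auto simp: encl_def)

lemma enc_ne[simp]: "enc a \<noteq> []" by (cases a) (auto simp: enc_def)

lemma prefix_repl: "prefix (replicate m x @ [y]) (replicate n x @ y # r) \<Longrightarrow> x \<noteq> y \<Longrightarrow> m = n"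
proof (induction m arbitrary: n)
  case 0 then show ?case by (cases n) auto
next
  case (Suc m) then show ?case by (cases n) auto
qed

lemma ncode_inj: "\<not> is_Sym a \<Longrightarrow> \<not> is_Sym b \<Longrightarrow> ncode a = ncode b \<Longrightarrow> a = b"
  by (cases a; cases b) (auto simp: is_Sym_def)

lemma enc_nonSym: "\<not> is_Sym a \<Longrightarrow> enc a = sym1 # replicate (ncode a) sym1 @ [sym0]"
  by (cases a) (auto simp: enc_def is_Sym_def)

lemma enc_prefix_free:
  assumes p: "prefix (enc a) (enc b @ r)" shows "a = b"
proof (cases "is_Sym a")
  case True
  then obtain c where a: "a = Sym c" by (cases a) (auto simp: is_Sym_def)
  show ?thesis
  proof (cases "is_Sym b")
    case True
    then obtain c' where "b = Sym c'" by (cases b) (auto simp: is_Sym_def)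
    then show ?thesis using p a by (simp add: enc_def)
  next
    case False
    then show ?thesis using p a by (simp add: enc_nonSym)
  qed
next
  case na: False
  show ?thesis
  proof (cases "is_Sym b")
    case True
    then obtain c' where "b = Sym c'" by (cases b) (auto simp: is_Sym_def)
    then show ?thesis using p na by (simp add: enc_nonSym)
  next
    case False
    have "prefix (replicate (ncode a) sym1 @ [sym0]) (replicate (ncode b) sym1 @ sym0 # r)"
      using p na False by (simp add: enc_nonSym)
    then have "ncode a = ncode b" by (rule prefix_repl) simp
    then show ?thesis using na False ncode_inj by blast
  qed
qed

lemma enc_prefix_encl: "prefix (enc a) (encl (b # r)) \<longleftrightarrow> a = b"
proof
  assume "prefix (enc a) (encl (b # r))"
  then show "a = b" using enc_prefix_free[of a b "encl r"] by (simp only: encl_simps)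
qed simp

lemma enc_prefix_Nil: "\<not> prefix (enc a) []" by simp

lemma encl_Nil_iff[simp]: "encl xs = [] \<longleftrightarrow> xs = []"
  by (cases xs) auto

lemma enc_Sym_hd: "\<not> is_Sym b \<Longrightarrow> \<not> prefix [sym0, c] (enc b @ r)"
  by (simp add: enc_nonSym)


definition lets :: "'c::alphabet list" where "lets = sorted_list_of_set UNIV"

lemma set_lets[simp]: "set (lets :: 'c::alphabet list) = UNIV"
  by (simp add: lets_def)

definition syms :: "'c::alphabet tm \<Rightarrow> 'c tsym list" where
  "syms M = [Blank, Sep] @ map Sym lets @ map Aux [0..<tm_naux M]"

lemma set_syms: "a \<in> set (syms M) \<longleftrightarrow> tm_valid_sym M a"
  by (cases a) (auto simp: syms_def tm_valid_sym_def)

definition inp :: "nat \<Rightarrow> var" where "inp i = 10 + i"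

definition setPH :: "nat \<Rightarrow> 'c::alphabet stmt" where
  "setPH p = Assign 0 (CST (replicate p sym1))"

definition isV :: "var \<Rightarrow> nat \<Rightarrow> 'c::alphabet expr" where
  "isV v p = EQ (Var v) (CST (replicate p sym1))"

definition NORMV :: "var \<Rightarrow> 'c::alphabet stmt" where
  "NORMV v = If (EQ (Var v) EPS) (Assign v (CST (enc Blank))) Skip"

definition POPL :: "'c::alphabet tm \<Rightarrow> 'c stmt" where
  "POPL M = CH (map (\<lambda>b. (enc b, 2, Seq (Assign 2 (TLN (length (enc b)) (Var 2)))
                                         (Assign 3 (PUSH (enc b) (Var 3))))) (syms M)) Skip"

definition MOVE :: "'c::alphabet tm \<Rightarrow> 'c tsym \<Rightarrow> dir \<Rightarrow> 'c stmt" where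
  "MOVE M a d = (case d of
      Right \<Rightarrow> Assign 2 (PUSH (enc a) (Var 2))
    | Stay \<Rightarrow> Assign 3 (PUSH (enc a) (Var 3))
    | Left \<Rightarrow> Seq (Assign 3 (PUSH (enc a) (Var 3))) (Seq (NORMV 2) (POPL M)))"

definition ACT :: "'c::alphabet tm \<Rightarrow> nat \<Rightarrow> 'c tsym \<Rightarrow> 'c stmt" where
  "ACT M q a = (case tm_delta M q a of (q', a', d) \<Rightarrow>
      Seq (Assign 1 (CST (replicate q' sym1)))
        (Seq (Assign 3 (TLN (length (enc a)) (Var 3))) (MOVE M a' d)))"

definition DISPQ :: "'c::alphabet tm \<Rightarrow> nat \<Rightarrow> 'c stmt" where
  "DISPQ M q = CH (map (\<lambda>a. (enc a, 3, ACT M q a)) (syms M)) Skip"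

definition DISP :: "'c::alphabet tm \<Rightarrow> 'c stmt" where
  "DISP M = foldr (\<lambda>q rest. If (isV 1 q) (DISPQ M q) rest) [0..<tm_nstates M] Skip"

definition SIM :: "'c::alphabet tm \<Rightarrow> 'c stmt" where
  "SIM M = If (isV 1 1) (setPH 3) (Seq (NORMV 3) (DISP M))"

definition PH1 :: "'c::alphabet tm \<Rightarrow> 'c stmt" where
  "PH1 M = If (EQ (Var 2) EPS) (setPH 2) (POPL M)"

definition PH3 :: "'c::alphabet stmt" where
  "PH3 = CH (map (\<lambda>c. ([sym0, c], 3, Seq (Assign 3 (TLN 2 (Var 3))) (Assign 7 (PUSH [c] (Var 7))))) lets)
           (setPH 4)"

definition PH4 :: "'c::alphabet stmt" where
  "PH4 = CH (map (\<lambda>c. ([c], 7, Seq (Assign 7 (TL (Var 7))) (Assign 8 (PUSH [c] (Var 8))))) lets)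
           (setPH 5)"

definition SELECT :: "nat \<Rightarrow> 'c::alphabet stmt" where
  "SELECT k = foldr (\<lambda>i rest. If (isV 5 i) (Seq (Assign 4 (Var (inp i))) (Assign 6 TRUE)) rest)
      [0..<k] (setPH 1)"

definition LOADNEXT :: "nat \<Rightarrow> 'c::alphabet stmt" where
  "LOADNEXT k = If (EQ (Var 6) TRUE)
     (Seq (Assign 2 (PUSH (enc Sep) (Var 2))) (Seq (Assign 6 ZERO) (Assign 5 (CONS sym1 (Var 5)))))
     (SELECT k)"

definition PH0 :: "nat \<Rightarrow> 'c::alphabet stmt" where
  "PH0 k = If (EQ (Var 4) EPS) (LOADNEXT k)
     (CH (map (\<lambda>c. ([c], 4, Seq (Assign 2 (PUSH (enc (Sym c)) (Var 2))) (Assign 4 (TL (Var 4))))) lets) Skip)"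

definition BODY :: "'c::alphabet tm \<Rightarrow> nat \<Rightarrow> 'c stmt" where
  "BODY M k = If (isV 0 0) (PH0 k) (If (isV 0 1) (PH1 M) (If (isV 0 2) (SIM M)
      (If (isV 0 3) PH3 (If (isV 0 4) PH4 Skip))))"

lemma evars_isV[simp]: "evars (isV v p :: 'c::alphabet expr) = {v}" by (simp add: isV_def)
lemma wfe_isV[simp]: "wfe \<Gamma> (isV v p :: 'c::alphabet expr) = (v \<in> dom \<Gamma>)" by (simp add: isV_def)
lemma is_op_isV[simp]: "is_op (isV v p)" by (simp add: isV_def)

definition good :: "var_env \<Rightarrow> nat \<Rightarrow> 'c::alphabet stmt \<Rightarrow> bool" where
  "good \<Gamma> k s \<longleftrightarrow> simple s \<and> svars s \<subseteq> {..<10 + k} \<and> mods s \<subseteq> {..<10} \<and> wfs \<Gamma> s"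

lemma good_simps:
  "good \<Gamma> k Skip"
  "good \<Gamma> k (Seq a b) \<longleftrightarrow> good \<Gamma> k a \<and> good \<Gamma> k b"
  by (auto simp: good_def)

lemma good_If: "good \<Gamma> k a \<Longrightarrow> good \<Gamma> k b \<Longrightarrow> wfe \<Gamma> e \<Longrightarrow> is_op e \<Longrightarrow> evars e \<subseteq> {..<10 + k}
   \<Longrightarrow> good \<Gamma> k (If e a b)"
  by (auto simp: good_def)

lemma good_Assign: "x < 10 \<Longrightarrow> \<Gamma> x = Some 0 \<Longrightarrow> wfe \<Gamma> e \<Longrightarrow> evars e \<subseteq> {..<10 + k}
   \<Longrightarrow> good \<Gamma> k (Assign x e)"
  by (auto simp: good_def)

lemma good_CH: "(\<forall>(u,v,a)\<in>set xs. good \<Gamma> k a \<and> v \<in> dom \<Gamma> \<and> v < 10 + k) \<Longrightarrow> good \<Gamma> k d \<Longrightarrow>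
   good \<Gamma> k (CH xs d)"
  unfolding good_def
  apply (intro conjI)
  apply (rule simple_CH; fastforce)
  using svars_CH[of xs d] apply fastforce
  using mods_CH[of xs d] apply fastforce
  apply (rule wfs_CH; fastforce)
  done

lemma good_foldr: "(\<forall>x\<in>set xs. good \<Gamma> k (f x)) \<Longrightarrow> good \<Gamma> k d \<Longrightarrow>
   (\<forall>x\<in>set xs. wfe \<Gamma> (g x) \<and> is_op (g x) \<and> evars (g x) \<subseteq> {..<10 + k}) \<Longrightarrow>
   good \<Gamma> k (foldr (\<lambda>x rest. If (g x) (f x) rest) xs d)"
  by (induction xs) (auto intro: good_If)

definition Gam :: "nat \<Rightarrow> nat \<Rightarrow> var_env" where
  "Gam k m x = (if x < 10 then Some 0 else if x < m then Some 1 else None)"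

lemma Gam_small[simp]: "x < 10 \<Longrightarrow> Gam k m x = Some 0" by (simp add: Gam_def)
lemma Gam_dom: "x < m \<Longrightarrow> x \<in> dom (Gam k m)" by (auto simp: Gam_def)

lemma good_BODY:
  fixes M :: "'c::alphabet tm"
  assumes "10 + k \<le> m"
  shows "good (Gam k m) k (BODY M k)"
proof -
  let ?G = "Gam k m"
  have d: "x < m \<Longrightarrow> x \<in> dom ?G" for x by (auto simp: Gam_def)
  have z: "x < 10 \<Longrightarrow> ?G x = Some 0" for x by (simp add: Gam_def)
  have GA: "x < 10 \<Longrightarrow> wfe ?G e \<Longrightarrow> evars e \<subseteq> {..<10 + k} \<Longrightarrow> good ?G k (Assign x e)" for x e
    by (rule good_Assign) (auto simp: Gam_def)
  have popl: "good ?G k (POPL M)"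
    unfolding POPL_def using assms d by (intro good_CH) (auto intro!: GA simp: good_simps)
  have normv: "v < 10 \<Longrightarrow> good ?G k (NORMV v)" for v
    unfolding NORMV_def using assms d by (auto intro!: good_If GA simp: good_simps)
  have move: "good ?G k (MOVE M a dd)" for a dd
    unfolding MOVE_def using assms d popl normv[of 2]
    by (cases dd) (auto intro!: GA simp: good_simps)
  have act: "good ?G k (ACT M q a)" for q a
    unfolding ACT_def using assms d move
    by (auto intro!: GA simp: good_simps split: prod.splits)
  have sim: "good ?G k (SIM M)"
    unfolding SIM_def DISP_def DISPQ_def setPH_def using assms d act normv[of 3]
    by (auto intro!: good_If GA good_foldr good_CH simp: good_simps)
  have ph1: "good ?G k (PH1 M)"
    unfolding PH1_def setPH_def using assms d popl by (auto intro!: good_If GA)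
  have ph3: "good ?G k (PH3 :: 'c stmt)"
    unfolding PH3_def setPH_def using assms d by (auto intro!: good_CH GA simp: good_simps)
  have ph4: "good ?G k (PH4 :: 'c stmt)"
    unfolding PH4_def setPH_def using assms d by (auto intro!: good_CH GA simp: good_simps)
  have sel: "good ?G k (SELECT k :: 'c stmt)"
    unfolding SELECT_def setPH_def using assms d
    by (intro good_foldr) (auto intro!: GA simp: good_simps inp_def)
  have ph0: "good ?G k (PH0 k :: 'c stmt)"
    unfolding PH0_def LOADNEXT_def using assms d sel
    by (auto intro!: good_If good_CH GA simp: good_simps)
  show ?thesis unfolding BODY_def using assms d ph0 ph1 sim ph3 ph4
    by (auto intro!: good_If simp: good_simps)
qed


definition stepS :: "'c::alphabet tm \<Rightarrow> nat \<Rightarrow> 'c store \<Rightarrow> 'c store" where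
  "stepS M k \<mu> = sexec \<mu> (BODY M k)"

lemma eval_isV[simp]: "eval_e \<mu> (isV v p) = bw (\<mu> v = replicate p sym1)"
  by (simp add: isV_def)

lemma sexec_setPH[simp]: "sexec \<mu> (setPH p) = \<mu>(0 := replicate p sym1)"
  by (simp add: setPH_def)

lemma rep_eq1[simp]: "replicate p x = [x] \<longleftrightarrow> p = 1"
  by (cases p) auto

lemma step_ph:
  assumes "\<mu> 0 = replicate p sym1"
  shows "stepS M k \<mu> = (if p = 0 then sexec \<mu> (PH0 k) else if p = 1 then sexec \<mu> (PH1 M)
     else if p = 2 then sexec \<mu> (SIM M) else if p = 3 then sexec \<mu> PH3
     else if p = 4 then sexec \<mu> PH4 else \<mu>)"
  using assms by (simp add: stepS_def BODY_def)

lemma sexec_foldr_hit: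
  assumes "y \<in> set xs" "eval_e \<mu> (g y) = [sym1]" "\<And>x. x \<in> set xs \<Longrightarrow> eval_e \<mu> (g x) = [sym1] \<Longrightarrow> x = y"
  shows "sexec \<mu> (foldr (\<lambda>x rest. If (g x) (f x) rest) xs d) = sexec \<mu> (f y)"
  using assms
proof (induction xs)
  case (Cons a xs)
  show ?case
  proof (cases "eval_e \<mu> (g a) = [sym1]")
    case True
    then have "a = y" using Cons.prems(3)[of a] by simp
    then show ?thesis using True by simp
  next
    case False
    then have y: "y \<in> set xs" using Cons.prems(1,2) by auto
    have "sexec \<mu> (foldr (\<lambda>x rest. If (g x) (f x) rest) xs d) = sexec \<mu> (f y)"
      using Cons.IH[OF y Cons.prems(2)] Cons.prems(3) by simp
    then show ?thesis using False by simp
  qed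
qed simp

lemma sexec_foldr_none:
  "(\<And>x. x \<in> set xs \<Longrightarrow> eval_e \<mu> (g x) \<noteq> [sym1]) \<Longrightarrow>
   sexec \<mu> (foldr (\<lambda>x rest. If (g x) (f x) rest) xs d) = sexec \<mu> d"
proof (induction xs)
  case (Cons a xs) then show ?case by simp
qed simp

lemma ph4_step_Cons:
  assumes "\<mu> 0 = replicate 4 sym1" "\<mu> 7 = c # T"
  shows "stepS M k \<mu> = \<mu>(7 := T, 8 := c # \<mu> 8)"
proof -
  have "sexec \<mu> PH4 = sexec \<mu> (Seq (Assign 7 (TL (Var 7))) (Assign 8 (PUSH [c] (Var 8))))"
    unfolding PH4_def
    by (rule sexec_CH_map_hit[where y=c]) (use assms in auto)
  then show ?thesis using assms by (simp add: step_ph)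
qed

lemma ph4_step_Nil:
  assumes "\<mu> 0 = replicate 4 sym1" "\<mu> 7 = []"
  shows "stepS M k \<mu> = \<mu>(0 := replicate 5 sym1)"
proof -
  have "sexec \<mu> PH4 = sexec \<mu> (setPH 5)"
    unfolding PH4_def by (rule sexec_CH_map_none) (use assms in auto)
  then show ?thesis using assms by (simp add: step_ph)
qed

lemma ph4_run:
  assumes "\<mu> 0 = replicate 4 sym1"
  shows "(stepS M k ^^ (length (\<mu> 7) + 1)) \<mu> = \<mu>(0 := replicate 5 sym1, 7 := [], 8 := rev (\<mu> 7) @ \<mu> 8)"
  using assms
proof (induction "\<mu> 7" arbitrary: \<mu>)
  case Nil
  then show ?case using ph4_step_Nil[of \<mu>] by (simp add: fun_upd_idem)
next
  case (Cons c T)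
  let ?\<mu>' = "\<mu>(7 := T, 8 := c # \<mu> 8)"
  have s: "stepS M k \<mu> = ?\<mu>'" using ph4_step_Cons[of \<mu> c T M k] Cons.prems Cons.hyps(2) by simp
  have ih: "(stepS M k ^^ (length (?\<mu>' 7) + 1)) ?\<mu>' = ?\<mu>'(0 := replicate 5 sym1, 7 := [], 8 := rev (?\<mu>' 7) @ ?\<mu>' 8)"
    by (rule Cons.hyps(1)) (use Cons.prems in auto)
  have "(stepS M k ^^ (length (\<mu> 7) + 1)) \<mu> = (stepS M k ^^ (length T + 1)) (stepS M k \<mu>)"
    using Cons.hyps(2)[symmetric] by (simp add: funpow_Suc_right del: funpow.simps)
  also have "\<dots> = ?\<mu>'(0 := replicate 5 sym1, 7 := [], 8 := rev T @ c # \<mu> 8)"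
    using ih s by simp
  also have "\<dots> = \<mu>(0 := replicate 5 sym1, 7 := [], 8 := rev (\<mu> 7) @ \<mu> 8)"
    using Cons.hyps(2)[symmetric] by (simp add: fun_eq_iff)
  finally show ?case .
qed

lemma prefix_Sym_encl: "prefix [sym0, c] (encl rs) \<longleftrightarrow> (\<exists>rs'. rs = Sym c # rs')"
proof (cases rs)
  case (Cons b rs')
  show ?thesis
  proof (cases "is_Sym b")
    case True
    then obtain c' where "b = Sym c'" by (cases b) (auto simp: is_Sym_def)
    then show ?thesis using Cons by auto
  next
    case False
    then have "b \<noteq> Sym c" by (auto simp: is_Sym_def)
    then show ?thesis using Cons enc_Sym_hd[OF False, of c "encl rs'"] by simp
  qed
qed simp

lemma ph3_step_Cons:
  assumes "\<mu> 0 = replicate 3 sym1" "\<mu> 3 = encl (Sym c # rs)"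
  shows "stepS M k \<mu> = \<mu>(3 := encl rs, 7 := c # \<mu> 7)"
proof -
  have "sexec \<mu> PH3 = sexec \<mu> (Seq (Assign 3 (TLN 2 (Var 3))) (Assign 7 (PUSH [c] (Var 7))))"
    unfolding PH3_def
    by (rule sexec_CH_map_hit[where y=c]) (use assms in \<open>auto simp: prefix_Sym_encl\<close>)
  then show ?thesis using assms by (simp add: step_ph)
qed

lemma ph3_step_end:
  assumes "\<mu> 0 = replicate 3 sym1" "\<mu> 3 = encl rs" "\<not> (\<exists>c rs'. rs = Sym c # rs')"
  shows "stepS M k \<mu> = \<mu>(0 := replicate 4 sym1)"
proof -
  have "sexec \<mu> PH3 = sexec \<mu> (setPH 4)"
    unfolding PH3_def by (rule sexec_CH_map_none) (use assms in \<open>auto simp: prefix_Sym_encl\<close>)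
  then show ?thesis using assms by (simp add: step_ph)
qed

lemma ph3_run:
  assumes "\<mu> 0 = replicate 3 sym1" "\<mu> 3 = encl rs"
  shows "(stepS M k ^^ (length (takeWhile is_Sym rs) + 1)) \<mu> =
    \<mu>(0 := replicate 4 sym1, 3 := encl (dropWhile is_Sym rs),
      7 := rev (map the_Sym (takeWhile is_Sym rs)) @ \<mu> 7)"
  using assms
proof (induction rs arbitrary: \<mu>)
  case Nil
  then show ?case using ph3_step_end[of \<mu> "[]"] by (simp add: fun_eq_iff)
next
  case (Cons b rs)
  show ?case
  proof (cases "is_Sym b")
    case False
    have "stepS M k \<mu> = \<mu>(0 := replicate 4 sym1)"
      by (rule ph3_step_end[of \<mu> "b # rs"]) (use Cons.prems False in \<open>auto simp: is_Sym_def\<close>)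
    then show ?thesis using Cons.prems False by (simp add: fun_eq_iff)
  next
    case True
    then obtain c where b: "b = Sym c" by (cases b) (auto simp: is_Sym_def)
    let ?\<mu>' = "\<mu>(3 := encl rs, 7 := c # \<mu> 7)"
    have s: "stepS M k \<mu> = ?\<mu>'" using ph3_step_Cons[of \<mu> c rs] Cons.prems b by simp
    have ih: "(stepS M k ^^ (length (takeWhile is_Sym rs) + 1)) ?\<mu>' =
       ?\<mu>'(0 := replicate 4 sym1, 3 := encl (dropWhile is_Sym rs),
      7 := rev (map the_Sym (takeWhile is_Sym rs)) @ ?\<mu>' 7)"
      by (rule Cons.IH) (use Cons.prems in auto)
    have "(stepS M k ^^ (length (takeWhile is_Sym (b # rs)) + 1)) \<mu> =
        (stepS M k ^^ (length (takeWhile is_Sym rs) + 1)) (stepS M k \<mu>)"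
      using True by (simp add: funpow_Suc_right del: funpow.simps)
    also have "\<dots> = (stepS M k ^^ (length (takeWhile is_Sym rs) + 1)) ?\<mu>'" by (simp only: s)
    also have "\<dots> = ?\<mu>'(0 := replicate 4 sym1, 3 := encl (dropWhile is_Sym rs),
      7 := rev (map the_Sym (takeWhile is_Sym rs)) @ ?\<mu>' 7)" by (rule ih)
    also have "\<dots> = \<mu>(0 := replicate 4 sym1, 3 := encl (dropWhile is_Sym (b # rs)),
      7 := rev (map the_Sym (takeWhile is_Sym (b # rs))) @ \<mu> 7)"
      using b True by (simp add: fun_eq_iff the_Sym_def)
    finally show ?thesis .
  qed
qed

lemma sexec_POPL:
  assumes "\<mu> 2 = encl (b # ls)" "b \<in> set (syms M)"
  shows "sexec \<mu> (POPL M) = \<mu>(2 := encl ls, 3 := enc b @ \<mu> 3)"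
proof -
  have "sexec \<mu> (POPL M) = sexec \<mu> (Seq (Assign 2 (TLN (length (enc b)) (Var 2)))
                                         (Assign 3 (PUSH (enc b) (Var 3))))"
    unfolding POPL_def
    by (rule sexec_CH_map_hit[where y=b]) (use assms in \<open>auto simp: enc_prefix_encl dest: enc_prefix_free\<close>)
  then show ?thesis using assms by simp
qed

lemma ph1_step_Cons:
  assumes "\<mu> 0 = replicate 1 sym1" "\<mu> 2 = encl (b # ls)" "b \<in> set (syms M)"
  shows "stepS M k \<mu> = \<mu>(2 := encl ls, 3 := enc b @ \<mu> 3)"
  using assms sexec_POPL[of \<mu> b ls M] step_ph[of \<mu> 1 M k] by (simp add: PH1_def)

lemma ph1_step_Nil:
  assumes "\<mu> 0 = replicate 1 sym1" "\<mu> 2 = []"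
  shows "stepS M k \<mu> = \<mu>(0 := replicate 2 sym1)"
  using assms step_ph[of \<mu> 1 M k] by (simp add: PH1_def)

lemma ph1_run:
  assumes "\<mu> 0 = replicate 1 sym1" "\<mu> 2 = encl ls" "set ls \<subseteq> set (syms M)"
  shows "(stepS M k ^^ (length ls + 1)) \<mu> = \<mu>(0 := replicate 2 sym1, 2 := [], 3 := encl (rev ls) @ \<mu> 3)"
  using assms
proof (induction ls arbitrary: \<mu>)
  case Nil
  then show ?case using ph1_step_Nil[of \<mu> M k] by (simp add: fun_eq_iff)
next
  case (Cons b ls)
  let ?\<mu>' = "\<mu>(2 := encl ls, 3 := enc b @ \<mu> 3)"
  have s: "stepS M k \<mu> = ?\<mu>'" using ph1_step_Cons[of \<mu> b ls M k] Cons.prems by simp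
  have "(stepS M k ^^ (length (b # ls) + 1)) \<mu> = (stepS M k ^^ (length ls + 1)) (stepS M k \<mu>)"
    by (simp add: funpow_Suc_right del: funpow.simps)
  also have "\<dots> = (stepS M k ^^ (length ls + 1)) ?\<mu>'" by (simp only: s)
  also have "\<dots> = ?\<mu>'(0 := replicate 2 sym1, 2 := [], 3 := encl (rev ls) @ ?\<mu>' 3)"
    by (rule Cons.IH) (use Cons.prems in auto)
  also have "\<dots> = \<mu>(0 := replicate 2 sym1, 2 := [], 3 := encl (rev (b # ls)) @ \<mu> 3)"
    by (simp add: fun_eq_iff)
  finally show ?case .
qed

lemma step_ph0:
  assumes "\<mu> 0 = []" shows "stepS M k \<mu> = sexec \<mu> (PH0 k)"
  using step_ph[of \<mu> 0 M k] assms by simp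

lemma ph0_push:
  assumes "\<mu> 0 = []" "\<mu> 4 = c # x"
  shows "stepS M k \<mu> = \<mu>(2 := enc (Sym c) @ \<mu> 2, 4 := x)"
proof -
  have "sexec \<mu> (CH (map (\<lambda>c. ([c], 4, Seq (Assign 2 (PUSH (enc (Sym c)) (Var 2))) (Assign 4 (TL (Var 4))))) lets) Skip)
     = sexec \<mu> (Seq (Assign 2 (PUSH (enc (Sym c)) (Var 2))) (Assign 4 (TL (Var 4))))"
    by (rule sexec_CH_map_hit[where y=c]) (use assms in auto)
  then show ?thesis using assms by (simp add: step_ph0 PH0_def)
qed

lemma ph0_runx:
  assumes "\<mu> 0 = []"
  shows "(stepS M k ^^ length (\<mu> 4)) \<mu> = \<mu>(2 := encl (rev (map Sym (\<mu> 4))) @ \<mu> 2, 4 := [])"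
  using assms
proof (induction "\<mu> 4" arbitrary: \<mu>)
  case Nil
  then show ?case by (simp add: fun_eq_iff)
next
  case (Cons c x)
  let ?\<mu>' = "\<mu>(2 := enc (Sym c) @ \<mu> 2, 4 := x)"
  have s: "stepS M k \<mu> = ?\<mu>'" using ph0_push[of \<mu> c x M k] Cons.prems Cons.hyps(2) by simp
  have "(stepS M k ^^ length (\<mu> 4)) \<mu> = (stepS M k ^^ length x) (stepS M k \<mu>)"
    using Cons.hyps(2)[symmetric] by (simp add: funpow_Suc_right del: funpow.simps)
  also have "\<dots> = (stepS M k ^^ length (?\<mu>' 4)) ?\<mu>'" by (simp add: s)
  also have "\<dots> = ?\<mu>'(2 := encl (rev (map Sym (?\<mu>' 4))) @ ?\<mu>' 2, 4 := [])"
    by (rule Cons.hyps(1)) (use Cons.prems in auto)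
  also have "\<dots> = \<mu>(2 := encl (rev (map Sym (\<mu> 4))) @ \<mu> 2, 4 := [])"
    using Cons.hyps(2)[symmetric] by (simp add: fun_eq_iff)
  finally show ?case .
qed

lemma ph0_sep:
  assumes "\<mu> 0 = []" "\<mu> 4 = []" "\<mu> 6 = [sym1]"
  shows "stepS M k \<mu> = \<mu>(2 := enc Sep @ \<mu> 2, 6 := [sym0], 5 := sym1 # \<mu> 5)"
  using assms by (simp add: step_ph0 PH0_def LOADNEXT_def)

lemma ph0_sel:
  assumes "\<mu> 0 = []" "\<mu> 4 = []" "\<mu> 6 \<noteq> [sym1]" "\<mu> 5 = replicate i sym1" "i < k"
  shows "stepS M k \<mu> = \<mu>(4 := \<mu> (inp i), 6 := [sym1])"
proof -
  have "sexec \<mu> (SELECT k) = sexec \<mu> (Seq (Assign 4 (Var (inp i))) (Assign 6 TRUE))"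
    unfolding SELECT_def by (rule sexec_foldr_hit[where y=i]) (use assms in auto)
  then show ?thesis using assms by (simp add: step_ph0 PH0_def LOADNEXT_def)
qed

lemma ph0_done:
  assumes "\<mu> 0 = []" "\<mu> 4 = []" "\<mu> 6 \<noteq> [sym1]" "\<mu> 5 = replicate k sym1"
  shows "stepS M k \<mu> = \<mu>(0 := replicate 1 sym1)"
proof -
  have "sexec \<mu> (SELECT k) = sexec \<mu> (setPH 1)"
    unfolding SELECT_def by (rule sexec_foldr_none) (use assms in auto)
  then show ?thesis using assms by (simp add: step_ph0 PH0_def LOADNEXT_def)
qed

definition Ast :: "'c::alphabet word list \<Rightarrow> 'c store \<Rightarrow> nat \<Rightarrow> 'c store \<Rightarrow> bool" where
  "Ast ws \<mu>0 i \<mu> \<longleftrightarrow> \<mu> 0 = [] \<and> \<mu> 2 = encl (rev (tm_input (take i ws))) \<and> \<mu> 4 = [] \<and>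
     \<mu> 5 = replicate i sym1 \<and> \<mu> 6 \<noteq> [sym1] \<and> (\<forall>x. x \<notin> {0, 2, 4, 5, 6} \<longrightarrow> \<mu> x = \<mu>0 x)"

lemma tm_input_take_Suc: "i < length ws \<Longrightarrow>
   tm_input (take (Suc i) ws) = tm_input (take i ws) @ map Sym (ws ! i) @ [Sep]"
  by (simp add: tm_input_def take_Suc_conv_app_nth)

lemma inp_notin: "inp i \<notin> {0, 2, 4, 5, 6}" by (simp add: inp_def)

lemma A_step:
  assumes A: "Ast ws \<mu>0 i \<mu>" and i: "i < length ws" "length ws = k" and inp: "\<mu>0 (inp i) = ws ! i"
  shows "Ast ws \<mu>0 (Suc i) ((stepS M k ^^ (length (ws ! i) + 2)) \<mu>)"
proof -
  let ?w = "ws ! i"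
  have m: "\<mu> 0 = []" "\<mu> 4 = []" "\<mu> 6 \<noteq> [sym1]" "\<mu> 5 = replicate i sym1"
    "\<mu> 2 = encl (rev (tm_input (take i ws)))" "\<mu> (inp i) = ?w"
    using A inp inp_notin[of i] unfolding Ast_def by auto
  define \<mu>1 where "\<mu>1 = \<mu>(4 := \<mu> (inp i), 6 := [sym1])"
  have s1: "stepS M k \<mu> = \<mu>1" unfolding \<mu>1_def using ph0_sel[OF m(1-4)] i by simp
  define \<mu>2 where "\<mu>2 = \<mu>1(2 := encl (rev (map Sym (\<mu>1 4))) @ \<mu>1 2, 4 := [])"
  have s2: "(stepS M k ^^ length ?w) \<mu>1 = \<mu>2"
    unfolding \<mu>2_def using ph0_runx[of \<mu>1 M k] m by (simp add: \<mu>1_def)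
  define \<mu>3 where "\<mu>3 = \<mu>2(2 := enc Sep @ \<mu>2 2, 6 := [sym0], 5 := sym1 # \<mu>2 5)"
  have s3: "stepS M k \<mu>2 = \<mu>3"
    unfolding \<mu>3_def by (rule ph0_sep) (use m in \<open>auto simp: \<mu>2_def \<mu>1_def\<close>)
  have e1: "(stepS M k ^^ Suc (length ?w)) \<mu> = (stepS M k ^^ length ?w) (stepS M k \<mu>)"
    by (simp only: funpow_Suc_right o_apply)
  have "(stepS M k ^^ (length ?w + 2)) \<mu> = stepS M k ((stepS M k ^^ Suc (length ?w)) \<mu>)"
    by simp
  then have e: "(stepS M k ^^ (length ?w + 2)) \<mu> = \<mu>3" using e1 s1 s2 s3 by simp
  have "\<mu>3 2 = encl (rev (tm_input (take (Suc i) ws)))"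
    using m i by (simp add: \<mu>3_def \<mu>2_def \<mu>1_def tm_input_take_Suc)
  moreover have "\<mu>3 5 = replicate (Suc i) sym1" using m by (simp add: \<mu>3_def \<mu>2_def \<mu>1_def)
  moreover have "\<forall>x. x \<notin> {0, 2, 4, 5, 6} \<longrightarrow> \<mu>3 x = \<mu>0 x"
    using A unfolding Ast_def by (simp add: \<mu>3_def \<mu>2_def \<mu>1_def)
  ultimately show ?thesis unfolding e Ast_def using m by (simp add: \<mu>3_def \<mu>2_def \<mu>1_def)
qed

lemma A_run:
  assumes A: "Ast ws \<mu>0 0 \<mu>" and k: "length ws = k" and inp: "\<And>j. j < k \<Longrightarrow> \<mu>0 (inp j) = ws ! j"
  shows "i \<le> k \<Longrightarrow> Ast ws \<mu>0 i ((stepS M k ^^ (\<Sum>j<i. length (ws ! j) + 2)) \<mu>)"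
proof (induction i)
  case 0 then show ?case using A by simp
next
  case (Suc i)
  have "Ast ws \<mu>0 (Suc i) ((stepS M k ^^ (length (ws ! i) + 2)) ((stepS M k ^^ (\<Sum>j<i. length (ws ! j) + 2)) \<mu>))"
    by (rule A_step) (use Suc k inp in auto)
  then show ?case by (simp add: funpow_add add.commute)
qed

lemma phase0:
  assumes A: "Ast ws \<mu>0 0 \<mu>" and k: "length ws = k" and inp: "\<And>j. j < k \<Longrightarrow> \<mu>0 (inp j) = ws ! j"
  shows "\<exists>\<mu>'. (stepS M k ^^ ((\<Sum>j<k. length (ws ! j) + 2) + 1)) \<mu> = \<mu>' \<and>
     \<mu>' 0 = replicate 1 sym1 \<and> \<mu>' 2 = encl (rev (tm_input ws)) \<and>
     (\<forall>x. x \<notin> {0, 2, 4, 5, 6} \<longrightarrow> \<mu>' x = \<mu>0 x)"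
proof -
  let ?\<mu> = "(stepS M k ^^ (\<Sum>j<k. length (ws ! j) + 2)) \<mu>"
  have a: "Ast ws \<mu>0 k ?\<mu>" using A_run[OF A k inp, of k] by simp
  then have st: "stepS M k ?\<mu> = ?\<mu>(0 := replicate 1 sym1)"
    by (intro ph0_done) (auto simp: Ast_def)
  have "(stepS M k ^^ ((\<Sum>j<k. length (ws ! j) + 2) + 1)) \<mu> = ?\<mu>(0 := replicate 1 sym1)"
    using st by simp
  moreover have "(?\<mu>(0 := replicate 1 sym1)) 2 = encl (rev (tm_input ws))"
    using a k by (simp add: Ast_def)
  moreover have "\<forall>x. x \<notin> {0, 2, 4, 5, 6} \<longrightarrow> (?\<mu>(0 := replicate 1 sym1)) x = \<mu>0 x"
    using a by (simp add: Ast_def)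
  ultimately show ?thesis by auto
qed


definition nthB :: "'c tsym list \<Rightarrow> nat \<Rightarrow> 'c tsym" where
  "nthB xs i = (if i < length xs then xs ! i else Blank)"

definition nrm :: "'c tsym list \<Rightarrow> 'c tsym list" where
  "nrm xs = (if xs = [] then [Blank] else xs)"

lemma nrm_ne[simp]: "nrm xs \<noteq> []" by (simp add: nrm_def)
lemma nthB_nrm[simp]: "nthB (nrm xs) i = nthB xs i"
  by (cases i) (auto simp: nrm_def nthB_def)
lemma nthB_Cons0[simp]: "nthB (a # xs) 0 = a" by (simp add: nthB_def)
lemma nthB_ConsS[simp]: "nthB (a # xs) (Suc i) = nthB xs i" by (simp add: nthB_def)
lemma len_nrm: "length (nrm xs) \<le> Suc (length xs)" by (simp add: nrm_def)
lemma set_nrm: "set xs \<subseteq> set (syms M) \<Longrightarrow> set (nrm xs) \<subseteq> set (syms M)"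
  by (auto simp: nrm_def syms_def)

lemma sexec_NORMV: "\<mu> v = encl xs \<Longrightarrow> sexec \<mu> (NORMV v) = \<mu>(v := encl (nrm xs))"
  by (cases xs) (auto simp: NORMV_def nrm_def fun_upd_idem)

lemma sexec_DISP:
  assumes "\<mu> 1 = replicate q sym1" "q < tm_nstates M"
  shows "sexec \<mu> (DISP M) = sexec \<mu> (DISPQ M q)"
  unfolding DISP_def by (rule sexec_foldr_hit[where y=q]) (use assms in auto)

lemma sexec_DISPQ:
  assumes "\<mu> 3 = encl (a # rs)" "a \<in> set (syms M)"
  shows "sexec \<mu> (DISPQ M q) = sexec \<mu> (ACT M q a)"
  unfolding DISPQ_def
  by (rule sexec_CH_map_hit[where y=a]) (use assms in \<open>auto simp: enc_prefix_encl dest: enc_prefix_free\<close>)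

lemma sim_exec:
  assumes m: "\<mu> 0 = replicate 2 sym1" "\<mu> 1 = replicate q sym1" "q \<noteq> 1" "q < tm_nstates M"
    "\<mu> 2 = encl ls" "\<mu> 3 = encl rs" "nrm rs = a # rs1" "a \<in> set (syms M)"
    "tm_delta M q a = (q', a', d)" "set ls \<subseteq> set (syms M)"
  shows "stepS M k \<mu> = (case d of
      Right \<Rightarrow> \<mu>(1 := replicate q' sym1, 3 := encl rs1, 2 := encl (a' # ls))
    | Stay \<Rightarrow> \<mu>(1 := replicate q' sym1, 3 := encl (a' # rs1))
    | Left \<Rightarrow> (case nrm ls of b # ls1 \<Rightarrow> \<mu>(1 := replicate q' sym1, 2 := encl ls1, 3 := encl (b # a' # rs1))))"
proof -
  have s0: "stepS M k \<mu> = sexec \<mu> (SIM M)" using step_ph[of \<mu> 2 M k] m(1) by simp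
  let ?\<mu>a = "\<mu>(3 := encl (nrm rs))"
  have s1: "sexec \<mu> (SIM M) = sexec ?\<mu>a (DISP M)"
    using m(2,3) sexec_NORMV[of \<mu> 3 rs, OF m(6)] by (simp add: SIM_def)
  have s2: "sexec ?\<mu>a (DISP M) = sexec ?\<mu>a (ACT M q a)"
    using sexec_DISP[of ?\<mu>a q M] sexec_DISPQ[of ?\<mu>a a rs1 M q] m by simp
  let ?\<mu>b = "\<mu>(3 := encl rs1, 1 := replicate q' sym1)"
  have s3: "sexec ?\<mu>a (ACT M q a) = sexec ?\<mu>b (MOVE M a' d)"
    using m by (simp add: ACT_def fun_upd_twist)
  show ?thesis
  proof (cases d)
    case Left
    obtain b ls1 where bl: "nrm ls = b # ls1" by (cases "nrm ls") auto
    have vb: "b \<in> set (syms M)" using set_nrm[OF m(10)] bl by auto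
    let ?\<mu>c = "?\<mu>b(3 := encl (a' # rs1))"
    have "sexec ?\<mu>b (MOVE M a' d) = sexec (?\<mu>c(2 := encl (nrm ls))) (POPL M)"
      using Left m sexec_NORMV[of ?\<mu>c 2 ls] by (simp add: MOVE_def)
    also have "\<dots> = ?\<mu>c(2 := encl ls1, 3 := enc b @ encl (a' # rs1))"
      using sexec_POPL[of "?\<mu>c(2 := encl (nrm ls))" b ls1 M] bl vb by simp
    finally show ?thesis using s0 s1 s2 s3 Left bl by (simp add: fun_eq_iff)
  next
    case Right
    then show ?thesis using s0 s1 s2 s3 m by (simp add: MOVE_def fun_eq_iff)
  next
    case Stay
    then show ?thesis using s0 s1 s2 s3 m by (simp add: MOVE_def fun_eq_iff)
  qed
qed

definition SR :: "'c::alphabet tm \<Rightarrow> 'c tconf \<Rightarrow> 'c store \<Rightarrow> nat \<Rightarrow> bool" where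
  "SR M c \<mu> n \<longleftrightarrow> (case c of (q, tp, h) \<Rightarrow>
     \<mu> 0 = replicate 2 sym1 \<and> \<mu> 1 = replicate q sym1 \<and> q < tm_nstates M \<and>
     (\<exists>ls rs. \<mu> 2 = encl ls \<and> \<mu> 3 = encl rs \<and> set ls \<subseteq> set (syms M) \<and> set rs \<subseteq> set (syms M) \<and>
        (\<forall>i. tp (h + int i) = nthB rs i) \<and> (\<forall>i. tp (h - 1 - int i) = nthB ls i) \<and>
        length ls + length rs \<le> n))"

lemma sim_step:
  assumes wf: "tm_wf M" and sr: "SR M (q, tp, h) \<mu> n" and q1: "q \<noteq> 1"
  shows "SR M (tm_step M (q, tp, h)) (stepS M k \<mu>) (n + 2) \<and>
         (\<forall>x. x \<notin> {0, 1, 2, 3} \<longrightarrow> stepS M k \<mu> x = \<mu> x)"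
proof -
  obtain ls rs where m: "\<mu> 0 = replicate 2 sym1" "\<mu> 1 = replicate q sym1" "q < tm_nstates M"
    "\<mu> 2 = encl ls" "\<mu> 3 = encl rs" "set ls \<subseteq> set (syms M)" "set rs \<subseteq> set (syms M)"
    "\<forall>i. tp (h + int i) = nthB rs i" "\<forall>i. tp (h - 1 - int i) = nthB ls i"
    "length ls + length rs \<le> n"
    using sr unfolding SR_def by auto
  obtain a rs1 where ar: "nrm rs = a # rs1" by (cases "nrm rs") auto
  have ta: "tp h = a" using m(8)[rule_format, of 0] ar
    by (metis add.right_neutral nthB_Cons0 nthB_nrm of_nat_0)
  have va: "a \<in> set (syms M)" using set_nrm[OF m(7)] ar by auto
  have trs1: "tp (h + 1 + int i) = nthB rs1 i" for i
    using m(8)[rule_format, of "Suc i"] ar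
    by (metis add.assoc nthB_ConsS nthB_nrm of_nat_Suc add.commute)
  have lrs1: "length rs1 \<le> length rs" using len_nrm[of rs] ar by simp
  have srs1: "set rs1 \<subseteq> set (syms M)" using set_nrm[OF m(7)] ar by auto
  obtain q' a' d where dl: "tm_delta M q a = (q', a', d)" by (cases "tm_delta M q a") auto
  have wq: "q' < tm_nstates M" "a' \<in> set (syms M)"
    using wf m(3) va dl unfolding tm_wf_def set_syms by force+
  have ts: "tm_step M (q, tp, h) = (q', tp(h := a'), h + dir_off d)"
    using q1 ta dl by (simp add: tm_step_def)
  have ex: "stepS M k \<mu> = (case d of
      Right \<Rightarrow> \<mu>(1 := replicate q' sym1, 3 := encl rs1, 2 := encl (a' # ls))
    | Stay \<Rightarrow> \<mu>(1 := replicate q' sym1, 3 := encl (a' # rs1))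
    | Left \<Rightarrow> (case nrm ls of b # ls1 \<Rightarrow> \<mu>(1 := replicate q' sym1, 2 := encl ls1, 3 := encl (b # a' # rs1))))"
    by (rule sim_exec[OF m(1,2) q1 m(3,4,5) ar va dl m(6)])
  show ?thesis
  proof (cases d)
    case Right
    have "SR M (q', tp(h := a'), h + 1) (stepS M k \<mu>) (n + 2)"
      unfolding SR_def
    proof (simp only: prod.case, intro conjI exI)
      show "stepS M k \<mu> 0 = replicate 2 sym1" "stepS M k \<mu> 1 = replicate q' sym1"
        "stepS M k \<mu> 2 = encl (a' # ls)" "stepS M k \<mu> 3 = encl rs1"
        using ex Right m by auto
      show "q' < tm_nstates M" by (rule wq)
      show "set (a' # ls) \<subseteq> set (syms M)" "set rs1 \<subseteq> set (syms M)" using wq m srs1 by auto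
      show "\<forall>i. (tp(h := a')) (h + 1 + int i) = nthB rs1 i" using trs1 by simp
      show "\<forall>i. (tp(h := a')) (h + 1 - 1 - int i) = nthB (a' # ls) i"
      proof
        fix i show "(tp(h := a')) (h + 1 - 1 - int i) = nthB (a' # ls) i"
        proof (cases i)
          case (Suc j)
          then show ?thesis using m(9)[rule_format, of j] by (simp add: diff_diff_eq)
        qed simp
      qed
      show "length (a' # ls) + length rs1 \<le> n + 2" using m(10) lrs1 len_nrm[of rs] ar by simp
    qed
    then show ?thesis using ts Right ex by (simp add: dir_off_def)
  next
    case Stay
    have "SR M (q', tp(h := a'), h) (stepS M k \<mu>) (n + 2)"
      unfolding SR_def
    proof (simp only: prod.case, intro conjI exI)
      show "stepS M k \<mu> 0 = replicate 2 sym1" "stepS M k \<mu> 1 = replicate q' sym1"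
        "stepS M k \<mu> 2 = encl ls" "stepS M k \<mu> 3 = encl (a' # rs1)"
        using ex Stay m by auto
      show "q' < tm_nstates M" by (rule wq)
      show "set ls \<subseteq> set (syms M)" "set (a' # rs1) \<subseteq> set (syms M)" using wq m srs1 by auto
      show "\<forall>i. (tp(h := a')) (h + int i) = nthB (a' # rs1) i"
      proof
        fix i show "(tp(h := a')) (h + int i) = nthB (a' # rs1) i"
        proof (cases i)
          case (Suc j)
          then show ?thesis using trs1[of j] by (simp add: add.assoc)
        qed simp
      qed
      show "\<forall>i. (tp(h := a')) (h - 1 - int i) = nthB ls i" using m(9) by simp
      show "length ls + length (a' # rs1) \<le> n + 2" using m(10) lrs1 len_nrm[of rs] ar by simp
    qed
    then show ?thesis using ts Stay ex by (simp add: dir_off_def)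
  next
    case Left
    obtain b ls1 where bl: "nrm ls = b # ls1" by (cases "nrm ls") auto
    have tb: "tp (h - 1) = b" using m(9)[rule_format, of 0] bl
      by (metis diff_zero nthB_Cons0 nthB_nrm of_nat_0)
    have tls1: "tp (h - 1 - 1 - int i) = nthB ls1 i" for i
      using m(9)[rule_format, of "Suc i"] bl
      by (metis diff_diff_eq nthB_ConsS nthB_nrm of_nat_Suc add.commute)
    have sls1: "set (b # ls1) \<subseteq> set (syms M)" using set_nrm[OF m(6)] bl by auto
    have lls1: "length ls1 \<le> length ls" using len_nrm[of ls] bl by simp
    have "SR M (q', tp(h := a'), h - 1) (stepS M k \<mu>) (n + 2)"
      unfolding SR_def
    proof (simp only: prod.case, intro conjI exI)
      show "stepS M k \<mu> 0 = replicate 2 sym1" "stepS M k \<mu> 1 = replicate q' sym1"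
        "stepS M k \<mu> 2 = encl ls1" "stepS M k \<mu> 3 = encl (b # a' # rs1)"
        using ex Left m bl by auto
      show "q' < tm_nstates M" by (rule wq)
      show "set ls1 \<subseteq> set (syms M)" "set (b # a' # rs1) \<subseteq> set (syms M)" using wq sls1 srs1 by auto
      show "\<forall>i. (tp(h := a')) (h - 1 + int i) = nthB (b # a' # rs1) i"
      proof
        fix i show "(tp(h := a')) (h - 1 + int i) = nthB (b # a' # rs1) i"
        proof (cases i)
          case 0 then show ?thesis using tb by simp
        next
          case (Suc j)
          show ?thesis
          proof (cases j)
            case 0 then show ?thesis using Suc by simp
          next
            case (Suc j')
            have "h - 1 + int i = h + 1 + int j'" using Suc \<open>i = Suc j\<close> by simp
            then show ?thesis using trs1[of j'] Suc \<open>i = Suc j\<close> by (simp add: add_ac)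
          qed
        qed
      qed
      show "\<forall>i. (tp(h := a')) (h - 1 - 1 - int i) = nthB ls1 i" using tls1 by simp
      show "length ls1 + length (b # a' # rs1) \<le> n + 2" using m(10) lrs1 lls1 len_nrm[of rs] ar by simp
    qed
    then show ?thesis using ts Left ex bl by (simp add: dir_off_def)
  qed
qed

lemma sim_halt:
  assumes "SR M (1, tp, h) \<mu> n"
  shows "stepS M k \<mu> = \<mu>(0 := replicate 3 sym1)"
  using assms step_ph[of \<mu> 2 M k] unfolding SR_def by (simp add: SIM_def)


section \<open>Generic Turing machine lemmas\<close>

lemma tm_step_halt[simp]: "tm_step M (Suc 0, tp, h) = (Suc 0, tp, h)"
  by (simp add: tm_step_def)

lemma tm_step_run:
  "q \<noteq> 1 \<Longrightarrow> tm_delta M q (tp h) = (q', a, d) \<Longrightarrow> tm_step M (q, tp, h) = (q', tp(h := a), h + dir_off d)"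
  by (simp add: tm_step_def)

lemma funpow_halt[simp]: "(tm_step M ^^ n) (Suc 0, tp, h) = (Suc 0, tp, h)"
  by (induction n) auto

lemma scan_right:
  assumes "q \<noteq> 1" "\<And>j. j < m \<Longrightarrow> tm_delta M q (tp (h + int j)) = (q, tp (h + int j), Right)"
  shows "(tm_step M ^^ m) (q, tp, h) = (q, tp, h + int m)"
  using assms(2)
proof (induction m)
  case (Suc m)
  have "(tm_step M ^^ Suc m) (q, tp, h) = tm_step M (q, tp, h + int m)"
    using Suc by simp
  also have "\<dots> = (q, tp, h + int (Suc m))"
  proof -
    have d: "tm_delta M q (tp (h + int m)) = (q, tp (h + int m), Right)" using Suc.prems by simp
    show ?thesis using tm_step_run[where tp=tp and h="h + int m", OF assms(1) d] by (simp add: dir_off_def)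
  qed
  finally show ?case .
qed simp

lemma scan_left:
  assumes "q \<noteq> 1" "\<And>j. j < m \<Longrightarrow> tm_delta M q (tp (h - int j)) = (q, tp (h - int j), Left)"
  shows "(tm_step M ^^ m) (q, tp, h) = (q, tp, h - int m)"
  using assms(2)
proof (induction m)
  case (Suc m)
  have "(tm_step M ^^ Suc m) (q, tp, h) = tm_step M (q, tp, h - int m)"
    using Suc by simp
  also have "\<dots> = (q, tp, h - int (Suc m))"
  proof -
    have d: "tm_delta M q (tp (h - int m)) = (q, tp (h - int m), Left)" using Suc.prems by simp
    show ?thesis using tm_step_run[where tp=tp and h="h - int m", OF assms(1) d] by (simp add: dir_off_def)
  qed
  finally show ?case .
qed simp

lemma tm_output_eq:
  assumes "\<And>i. i < length w \<Longrightarrow> tp (h + int i) = Sym (w ! i)" "\<not> is_Sym (tp (h + int (length w)))"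
  shows "tm_output (q, tp, h) = w"
proof -
  have L: "(LEAST n. \<not> is_Sym (tp (h + int n))) = length w"
  proof (rule Least_equality)
    show "\<not> is_Sym (tp (h + int (length w)))" by fact
    fix y assume ny: "\<not> is_Sym (tp (h + int y))"
    show "length w \<le> y"
    proof (rule ccontr)
      assume "\<not> length w \<le> y"
      then have "tp (h + int y) = Sym (w ! y)" using assms(1) by simp
      then show False using ny by (simp add: is_Sym_def)
    qed
  qed
  show ?thesis unfolding tm_output_def
  proof (simp only: prod.case L, rule nth_equalityI)
    show "length (map (\<lambda>i. the_Sym (tp (h + int i))) [0..<length w]) = length w" by simp
    fix i assume "i < length (map (\<lambda>i. the_Sym (tp (h + int i))) [0..<length w])"
    then have i: "i < length w" by simp
    then show "map (\<lambda>i. the_Sym (tp (h + int i))) [0..<length w] ! i = w ! i"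
      using assms(1)[OF i] by (simp add: the_Sym_def)
  qed
qed

lemma tm_input_1: "tm_input [w] = map Sym w @ [Sep]" by (simp add: tm_input_def)
lemma tm_input_2: "tm_input [w1, w2] = map Sym w1 @ [Sep] @ map Sym w2 @ [Sep]"
  by (simp add: tm_input_def)
lemma tm_input_0: "tm_input [] = []" by (simp add: tm_input_def)


definition tp1 :: "'c list \<Rightarrow> int \<Rightarrow> 'c tsym" where
  "tp1 w i = (if 0 \<le> i \<and> i < int (length w) then Sym (w ! nat i)
              else if i = int (length w) then Sep else Blank)"

lemma tm_init_1: "tm_init [w] = (0, tp1 w, 0)"
  unfolding tm_init_def tm_input_1 tp1_def
  by (auto simp: nth_append fun_eq_iff not_less)

lemma tm_init_0: "tm_init [] = (0, \<lambda>i. Blank, 0)"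
  unfolding tm_init_def tm_input_0 by (auto simp: fun_eq_iff)

definition M_zero :: "'c::alphabet tm" where
  "M_zero = \<lparr>tm_nstates = 2, tm_naux = 0, tm_delta = (\<lambda>q a. (1, Sym sym0, Stay))\<rparr>"

lemma ptc_zero: "poly_time_computable (op_ar op_zero) (op_sem (op_zero::'c::alphabet operator))"
  unfolding poly_time_computable_def
proof (rule exI[of _ M_zero], rule exI[of _ "[:1:]"], intro conjI allI impI)
  show "tm_wf (M_zero :: 'c tm)" by (simp add: tm_wf_def M_zero_def tm_valid_sym_def)
  fix ws :: "'c list list" assume "length ws = op_ar op_zero"
  then have ws: "ws = []" by (simp add: op_zero_def)
  have r: "(tm_step M_zero ^^ 1) (tm_init ws) = (1, (\<lambda>i. Blank)(0 := Sym sym0), 0)"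
    unfolding ws tm_init_0 by (simp add: tm_step_def M_zero_def dir_off_def)
  show "\<exists>t. t \<le> poly [:1:] (sum_list (map length ws)) \<and>
           fst ((tm_step M_zero ^^ t) (tm_init ws)) = 1 \<and>
           tm_output ((tm_step M_zero ^^ t) (tm_init ws)) = op_sem op_zero ws"
    apply (rule exI[of _ 1])
    unfolding r by (auto simp: op_zero_def intro!: tm_output_eq simp: is_Sym_def)
qed

definition M_tail :: "'c::alphabet tm" where
  "M_tail = \<lparr>tm_nstates = 2, tm_naux = 0, tm_delta = (\<lambda>q a. (1, Blank, Right))\<rparr>"

lemma ptc_tail: "poly_time_computable (op_ar op_tail) (op_sem (op_tail::'c::alphabet operator))"
  unfolding poly_time_computable_def
proof (rule exI[of _ M_tail], rule exI[of _ "[:1:]"], intro conjI allI impI)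
  show "tm_wf (M_tail :: 'c tm)" by (simp add: tm_wf_def M_tail_def tm_valid_sym_def)
  fix ws :: "'c list list" assume "length ws = op_ar op_tail"
  then obtain w where ws: "ws = [w]" by (auto simp: op_tail_def length_Suc_conv)
  have r: "(tm_step M_tail ^^ 1) (tm_init ws) = (1, (tp1 w)(0 := Blank), 1)"
    unfolding ws tm_init_1 by (simp add: tm_step_def M_tail_def dir_off_def)
  have o: "tm_output (1::nat, (tp1 w)(0 := Blank), 1::int) = tl w"
  proof (rule tm_output_eq)
    fix i assume "i < length (tl w)"
    then show "((tp1 w)(0 := Blank)) (1 + int i) = Sym (tl w ! i)"
      by (cases w) (auto simp: tp1_def nat_add_distrib)
  next
    show "\<not> is_Sym (((tp1 w)(0 := Blank)) (1 + int (length (tl w))))"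
      by (cases w) (auto simp: tp1_def is_Sym_def)
  qed
  show "\<exists>t. t \<le> poly [:1:] (sum_list (map length ws)) \<and>
           fst ((tm_step M_tail ^^ t) (tm_init ws)) = 1 \<and>
           tm_output ((tm_step M_tail ^^ t) (tm_init ws)) = op_sem op_tail ws"
    apply (rule exI[of _ 1])
    unfolding r o by (simp add: op_tail_def ws)
qed

definition M_head :: "'c::alphabet tm" where
  "M_head = \<lparr>tm_nstates = 3, tm_naux = 0, tm_delta = (\<lambda>q a.
     if q = 0 then (if is_Sym a then (2, a, Right) else (1, a, Stay)) else (1, Blank, Left))\<rparr>"

lemma ptc_head: "poly_time_computable (op_ar op_head) (op_sem (op_head::'c::alphabet operator))"
  unfolding poly_time_computable_def
proof (rule exI[of _ M_head], rule exI[of _ "[:2:]"], intro conjI allI impI)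
  show "tm_wf (M_head :: 'c tm)" by (simp add: tm_wf_def M_head_def tm_valid_sym_def)
  fix ws :: "'c list list" assume "length ws = op_ar op_head"
  then obtain w where ws: "ws = [w]" by (auto simp: op_head_def length_Suc_conv)
  show "\<exists>t. t \<le> poly [:2:] (sum_list (map length ws)) \<and>
           fst ((tm_step M_head ^^ t) (tm_init ws)) = 1 \<and>
           tm_output ((tm_step M_head ^^ t) (tm_init ws)) = op_sem op_head ws"
  proof (cases w)
    case Nil
    have r: "(tm_step M_head ^^ 1) (tm_init ws) = (1, tp1 w, 0)"
      unfolding ws tm_init_1 using Nil
      by (simp add: tm_step_def M_head_def dir_off_def tp1_def is_Sym_def fun_eq_iff)
    have o: "tm_output (1::nat, tp1 w, 0::int) = []"
      by (rule tm_output_eq) (auto simp: Nil tp1_def is_Sym_def)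
    show ?thesis apply (rule exI[of _ 1]) unfolding r o by (simp add: op_head_def ws Nil)
  next
    case (Cons c w')
    have r: "(tm_step M_head ^^ 2) (tm_init ws) = (1, (tp1 w)(1 := Blank), 0)"
      unfolding ws tm_init_1 using Cons
      by (simp add: numeral_2_eq_2 tm_step_def M_head_def dir_off_def tp1_def is_Sym_def fun_eq_iff)
    have o: "tm_output (1::nat, (tp1 w)(1 := Blank), 0::int) = [c]"
      by (rule tm_output_eq) (auto simp: Cons tp1_def is_Sym_def)
    show ?thesis apply (rule exI[of _ 2]) unfolding r o by (simp add: op_head_def ws Cons)
  qed
qed

definition M_cons :: "'c::alphabet \<Rightarrow> 'c tm" where
  "M_cons c = \<lparr>tm_nstates = 3, tm_naux = 0, tm_delta = (\<lambda>q a.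
     if q = 0 then (2, a, Left) else (1, Sym c, Stay))\<rparr>"

lemma ptc_cons: "poly_time_computable (op_ar (op_cons c)) (op_sem (op_cons c::'c::alphabet operator))"
  unfolding poly_time_computable_def
proof (rule exI[of _ "M_cons c"], rule exI[of _ "[:2:]"], intro conjI allI impI)
  show "tm_wf (M_cons c :: 'c tm)" by (simp add: tm_wf_def M_cons_def tm_valid_sym_def)
  fix ws :: "'c list list" assume "length ws = op_ar (op_cons c)"
  then obtain w where ws: "ws = [w]" by (auto simp: op_cons_def length_Suc_conv)
  have r: "(tm_step (M_cons c) ^^ 2) (tm_init ws) = (1, (tp1 w)(-1 := Sym c), -1)"
    unfolding ws tm_init_1
    by (simp add: numeral_2_eq_2 tm_step_def M_cons_def dir_off_def tp1_def)
  have o: "tm_output (1::nat, (tp1 w)(-1 := Sym c), -1::int) = c # w"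
  proof (rule tm_output_eq)
    fix i assume i: "i < length (c # w)"
    show "((tp1 w)(-1 := Sym c)) (-1 + int i) = Sym ((c # w) ! i)"
    proof (cases i)
      case (Suc j) then show ?thesis using i by (auto simp: tp1_def)
    qed simp
  next
    show "\<not> is_Sym (((tp1 w)(-1 := Sym c)) (-1 + int (length (c # w))))"
      by (auto simp: tp1_def is_Sym_def)
  qed
  show "\<exists>t. t \<le> poly [:2:] (sum_list (map length ws)) \<and>
           fst ((tm_step (M_cons c) ^^ t) (tm_init ws)) = 1 \<and>
           tm_output ((tm_step (M_cons c) ^^ t) (tm_init ws)) = op_sem (op_cons c) ws"
    apply (rule exI[of _ 2])
    unfolding r o by (simp add: op_cons_def ws)
qed


definition cidx :: "'c::alphabet \<Rightarrow> nat" where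
  "cidx c = card {x. x < c}"

lemma cidx_inj: "cidx a = cidx b \<Longrightarrow> a = b"
proof (rule ccontr)
  assume e: "cidx a = cidx b" and ne: "a \<noteq> b"
  have less: "card {x::'c. x < u} < card {x. x < v}" if "u < v" for u v :: "'c::alphabet"
    by (rule psubset_card_mono) (use that in auto)
  from ne consider "a < b" | "b < a" by fastforce
  then show False using e less unfolding cidx_def by (metis less_irrefl)
qed

lemma cidx_less: "cidx (c::'c::alphabet) < card (UNIV :: 'c set)"
  unfolding cidx_def by (rule psubset_card_mono) auto

definition carry :: "'c::alphabet \<Rightarrow> nat" where "carry c = 5 + 2 * cidx c"
definition skp :: "'c::alphabet \<Rightarrow> nat" where "skp c = 6 + 2 * cidx c"

lemma carry_inj[simp]: "carry a = carry b \<longleftrightarrow> a = b"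
  by (auto simp: carry_def dest: cidx_inj)
lemma skp_inj[simp]: "skp a = skp b \<longleftrightarrow> a = b"
  by (auto simp: skp_def dest: cidx_inj)
lemma carry_skp[simp]: "carry a \<noteq> skp b" "skp b \<noteq> carry a"
  by (auto simp: carry_def skp_def) presburger+

definition dEq :: "nat \<Rightarrow> 'c::alphabet tsym \<Rightarrow> nat \<times> 'c tsym \<times> dir" where
  "dEq q a =
   (if q = 0 then (case a of Sym c \<Rightarrow> (carry c, Blank, Right) | Sep \<Rightarrow> (2, Sep, Right) | _ \<Rightarrow> (1, a, Stay))
    else if q = 2 then (if a = Aux 0 then (2, a, Right) else if a = Sep then (4, Sym sym1, Right)
                        else (4, Sym sym0, Right))
    else if q = 3 then (if a = Blank then (0, a, Right) else (3, a, Left))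
    else if q = 4 then (1, Blank, Left)
    else if (\<exists>c::'c. q = carry c) then
      (let c = (THE c::'c. q = carry c) in if a = Sep then (skp c, a, Right) else (q, a, Right))
    else if (\<exists>c::'c. q = skp c) then
      (let c = (THE c::'c. q = skp c) in if a = Aux 0 then (q, a, Right)
        else if a = Sym c then (3, Aux 0, Left) else (4, Sym sym0, Right))
    else (1, a, Stay))"

lemma carry_ne: "carry c \<noteq> 0" "carry c \<noteq> 1" "carry c \<noteq> 2" "carry c \<noteq> 3" "carry c \<noteq> 4"
  by (auto simp: carry_def)
lemma skp_ne: "skp c \<noteq> 0" "skp c \<noteq> 1" "skp c \<noteq> 2" "skp c \<noteq> 3" "skp c \<noteq> 4"
  by (auto simp: skp_def)

lemma dEq_carry[simp]: fixes c :: "'c::alphabet" and a :: "'c tsym" shows "dEq (carry c) a = (if a = Sep then (skp c, a, Right) else (carry c, a, Right))"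
proof -
  have "(THE c'. carry c = carry c') = c" by (rule the_equality) auto
  then show ?thesis unfolding dEq_def using carry_ne[of c] by (auto simp: Let_def)
qed

lemma dEq_skp[simp]: fixes c :: "'c::alphabet" and a :: "'c tsym" shows "dEq (skp c) a = (if a = Aux 0 then (skp c, a, Right)
        else if a = Sym c then (3, Aux 0, Left) else (4, Sym sym0, Right))"
proof -
  have "(THE c'. skp c = skp c') = c" by (rule the_equality) auto
  then show ?thesis unfolding dEq_def using skp_ne[of c] by (auto simp: Let_def)
qed

lemma dEq_0_Sym[simp]: "dEq 0 (Sym c) = (carry c, Blank, Right)" by (simp add: dEq_def)
lemma dEq_0_Sep[simp]: "dEq 0 Sep = (2, Sep, Right)" by (simp add: dEq_def)
lemma dEq_2[simp]: "dEq 2 a = (if a = Aux 0 then (2, a, Right) else if a = Sep then (4, Sym sym1, Right)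
                        else (4, Sym sym0, Right))" by (simp add: dEq_def)
lemma dEq_3[simp]: "dEq 3 a = (if a = Blank then (0, a, Right) else (3, a, Left))" by (simp add: dEq_def)
lemma dEq_4[simp]: "dEq 4 a = (1, Blank, Left)" by (simp add: dEq_def)

definition M_eq :: "'c::alphabet tm" where
  "M_eq = \<lparr>tm_nstates = 5 + 2 * card (UNIV :: 'c set), tm_naux = 1, tm_delta = dEq\<rparr>"

lemma dEq_ok:
  fixes a :: "'c::alphabet tsym"
  assumes "tm_valid_sym (M_eq :: 'c tm) a"
  shows "fst (dEq q a) < 5 + 2 * card (UNIV :: 'c set) \<and> tm_valid_sym (M_eq :: 'c tm) (fst (snd (dEq q a)))"
proof -
  have cl: "carry (c::'c) < 5 + 2 * card (UNIV :: 'c set)" "skp (c::'c) < 5 + 2 * card (UNIV :: 'c set)" for c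
    using cidx_less[of c] by (auto simp: carry_def skp_def)
  show ?thesis
  proof (cases "\<exists>c::'c. q = carry c")
    case True then obtain c :: 'c where "q = carry c" by blast
    then show ?thesis using assms cl by (auto simp: tm_valid_sym_def)
  next
    case nc: False
    show ?thesis
    proof (cases "\<exists>c::'c. q = skp c")
      case True then obtain c :: 'c where "q = skp c" by blast
      then show ?thesis using assms cl by (auto simp: tm_valid_sym_def M_eq_def)
    next
      case False
      with nc assms cl show ?thesis
        by (auto simp: dEq_def tm_valid_sym_def M_eq_def split: tsym.splits)
    qed
  qed
qed

lemma M_eq_wf: "tm_wf (M_eq :: 'c::alphabet tm)"
  unfolding tm_wf_def
proof (intro conjI allI impI)
  show "2 \<le> tm_nstates (M_eq :: 'c tm)" by (simp add: M_eq_def)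
  fix q a assume "q < tm_nstates (M_eq :: 'c tm) \<and> tm_valid_sym (M_eq :: 'c tm) a"
  then show "fst (tm_delta M_eq q a) < tm_nstates (M_eq :: 'c tm)"
    "tm_valid_sym (M_eq :: 'c tm) (fst (snd (tm_delta M_eq q a)))"
    using dEq_ok[of a q] by (auto simp: M_eq_def)
qed


definition TT :: "'c list \<Rightarrow> 'c list \<Rightarrow> nat \<Rightarrow> int \<Rightarrow> 'c tsym" where
 "TT w1 w2 r i =
   (if i < int r then Blank
   else if i < int (length w1) then Sym (w1 ! nat i)
   else if i = int (length w1) then Sep
   else if i \<le> int (length w1) + int r then Aux 0
   else if i \<le> int (length w1) + int (length w2) then Sym (w2 ! nat (i - int (length w1) - 1))
   else if i = int (length w1) + int (length w2) + 1 then Sep else Blank)"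

lemma init_TT: "tm_init [w1, w2] = (0, TT w1 w2 0, 0)"
proof -
  have "(if 0 \<le> i \<and> i < int (length (tm_input [w1, w2])) then tm_input [w1, w2] ! nat i else Blank)
        = TT w1 w2 0 i" for i
  proof -
    consider "i < 0" | "0 \<le> i" "i < int (length w1)" | "i = int (length w1)"
      | "int (length w1) < i" "i \<le> int (length w1) + int (length w2)"
      | "i = int (length w1) + int (length w2) + 1" | "i > int (length w1) + int (length w2) + 1"
      by linarith
    then show ?thesis
    proof cases
      case 2 then show ?thesis by (auto simp: TT_def tm_input_2 nth_append)
    next
      case 3 then show ?thesis by (auto simp: TT_def tm_input_2 nth_append)
    next
      case 4
      then have "nat i - length w1 = Suc (nat (i - int (length w1) - 1))" by linarith
      with 4 show ?thesis by (auto simp: TT_def tm_input_2 nth_append nat_diff_distrib)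
    next
      case 5
      then have "nat i - length w1 = Suc (length w2)" by linarith
      with 5 show ?thesis by (auto simp: TT_def tm_input_2 nth_append)
    qed (auto simp: TT_def tm_input_2)
  qed
  then show ?thesis unfolding tm_init_def by (simp add: fun_eq_iff)
qed

lemma carry_ne'[simp]: "carry c \<noteq> Suc 0" "Suc 0 \<noteq> carry c" "skp c \<noteq> Suc 0" "Suc 0 \<noteq> skp c"
  by (auto simp: carry_def skp_def)
lemmas [simp] = carry_ne skp_ne carry_ne[symmetric] skp_ne[symmetric]

lemma run_seq: "(f ^^ b) x = y \<Longrightarrow> (f ^^ a) y = z \<Longrightarrow> (f ^^ (a + b)) x = z"
  by (simp add: funpow_add)


lemma M_eq_delta[simp]: "tm_delta M_eq = dEq" by (simp add: M_eq_def)

lemma round: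
  fixes w1 w2 :: "'c::alphabet list"
  assumes r: "r < length w1" "r < length w2" "w1 ! r = w2 ! r"
  shows "(tm_step M_eq ^^ (2 * length w1 + 3)) (0, TT w1 w2 r, int r)
       = (0, TT w1 w2 (Suc r), int (Suc r))"
proof -
  let ?n1 = "length w1" and ?c = "w1 ! r"
  define T1 where "T1 = (TT w1 w2 r)(int r := Blank)"
  have s1: "(tm_step M_eq ^^ 1) (0, TT w1 w2 r, int r) = (carry ?c, T1, int r + 1)"
    using r by (simp add: tm_step_def TT_def T1_def dir_off_def)
  have s2: "(tm_step M_eq ^^ (?n1 - r - 1)) (carry ?c, T1, int r + 1) = (carry ?c, T1, int r + 1 + int (?n1 - r - 1))"
    by (rule scan_right) (use r in \<open>auto simp: T1_def TT_def\<close>)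
  have e2: "int r + 1 + int (?n1 - r - 1) = int ?n1" using r by simp
  have s3: "(tm_step M_eq ^^ 1) (carry ?c, T1, int ?n1) = (skp ?c, T1, int ?n1 + 1)"
    using r by (simp add: tm_step_def T1_def TT_def dir_off_def fun_upd_idem_iff)
  have s4: "(tm_step M_eq ^^ r) (skp ?c, T1, int ?n1 + 1) = (skp ?c, T1, int ?n1 + 1 + int r)"
    by (rule scan_right) (use r in \<open>auto simp: T1_def TT_def\<close>)
  have c5: "T1 (int ?n1 + 1 + int r) = Sym ?c"
    using r by (auto simp: T1_def TT_def)
  have T1u: "T1(int ?n1 + 1 + int r := Aux 0) = TT w1 w2 (Suc r)"
    using r by (auto simp: T1_def TT_def fun_eq_iff)
  have s5: "(tm_step M_eq ^^ 1) (skp ?c, T1, int ?n1 + 1 + int r) = (3, TT w1 w2 (Suc r), int ?n1 + int r)"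
    using c5 T1u by (simp add: tm_step_def dir_off_def)
  have s6: "(tm_step M_eq ^^ ?n1) (3, TT w1 w2 (Suc r), int ?n1 + int r) = (3, TT w1 w2 (Suc r), int ?n1 + int r - int ?n1)"
    by (rule scan_left) (use r in \<open>auto simp: TT_def\<close>)
  have s7: "(tm_step M_eq ^^ 1) (3, TT w1 w2 (Suc r), int r) = (0, TT w1 w2 (Suc r), int (Suc r))"
    by (simp add: tm_step_def TT_def dir_off_def fun_upd_idem_iff)
  have "2 * ?n1 + 3 = (((((1 + ?n1) + 1) + r) + 1) + (?n1 - r - 1)) + 1" using r by simp
  moreover have "(tm_step M_eq ^^ ((((((1 + ?n1) + 1) + r) + 1) + (?n1 - r - 1)) + 1)) (0, TT w1 w2 r, int r)
       = (0, TT w1 w2 (Suc r), int (Suc r))"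
    apply (rule run_seq[OF s1])
    apply (rule run_seq[OF s2[unfolded e2]])
    apply (rule run_seq[OF s3])
    apply (rule run_seq[OF s4])
    apply (rule run_seq[OF s5])
    apply (rule run_seq[OF s6[simplified]])
    apply (rule s7)
    done
  ultimately show ?thesis by (simp only:)
qed

lemma out1: "tp p = Sym x \<Longrightarrow> \<not> is_Sym (tp (p + 1)) \<Longrightarrow> tm_output (q, tp, p) = [x]"
  by (rule tm_output_eq) auto

lemma dEq_2'[simp]: "dEq (Suc (Suc 0)) a = (if a = Aux 0 then (2, a, Right) else if a = Sep then (4, Sym sym1, Right)
                        else (4, Sym sym0, Right))" using dEq_2[of a] by (simp add: numeral_2_eq_2)

lemma decide_skp:
  assumes "T p \<noteq> Aux 0" "T p \<noteq> Sym c"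
  shows "(tm_step M_eq ^^ 2) (skp c, T, p) = (1, T(p := Sym sym0, p + 1 := Blank), p)"
  using assms by (simp add: numeral_2_eq_2 tm_step_def dir_off_def)

lemma decide_2:
  assumes "T p \<noteq> Aux 0"
  shows "(tm_step M_eq ^^ 2) (2, T, p) = (1, T(p := Sym (if T p = Sep then sym1 else sym0), p + 1 := Blank), p)"
  using assms by (simp add: numeral_2_eq_2 tm_step_def dir_off_def)

lemma mismatch:
  fixes w1 w2 :: "'c::alphabet list"
  assumes r: "r < length w1" "\<not> (r < length w2 \<and> w1 ! r = w2 ! r)"
  shows "\<exists>T p. (tm_step M_eq ^^ (length w1 + 3)) (0, TT w1 w2 r, int r) = (1, T, p) \<and>
      tm_output (1::nat, T, p) = [sym0]"
proof -
  let ?n1 = "length w1" and ?c = "w1 ! r"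
  define T1 where "T1 = (TT w1 w2 r)(int r := Blank)"
  have s1: "(tm_step M_eq ^^ 1) (0, TT w1 w2 r, int r) = (carry ?c, T1, int r + 1)"
    using r by (simp add: tm_step_def TT_def T1_def dir_off_def)
  have s2: "(tm_step M_eq ^^ (?n1 - r - 1)) (carry ?c, T1, int r + 1) = (carry ?c, T1, int r + 1 + int (?n1 - r - 1))"
    by (rule scan_right) (use r in \<open>auto simp: T1_def TT_def\<close>)
  have e2: "int r + 1 + int (?n1 - r - 1) = int ?n1" using r by simp
  have s3: "(tm_step M_eq ^^ 1) (carry ?c, T1, int ?n1) = (skp ?c, T1, int ?n1 + 1)"
    using r by (simp add: tm_step_def T1_def TT_def dir_off_def fun_upd_idem_iff)
  have s4: "(tm_step M_eq ^^ r) (skp ?c, T1, int ?n1 + 1) = (skp ?c, T1, int ?n1 + 1 + int r)"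
    by (rule scan_right) (use r in \<open>auto simp: T1_def TT_def\<close>)
  let ?p = "int ?n1 + 1 + int r"
  have c5: "T1 ?p \<noteq> Aux 0" "T1 ?p \<noteq> Sym ?c"
    using r by (auto simp: T1_def TT_def)
  have s5: "(tm_step M_eq ^^ 2) (skp ?c, T1, ?p) = (1, T1(?p := Sym sym0, ?p + 1 := Blank), ?p)"
    by (rule decide_skp[where T=T1 and p="?p", OF c5])
  have "(tm_step M_eq ^^ ((((2 + r) + 1) + (?n1 - r - 1)) + 1)) (0, TT w1 w2 r, int r)
       = (1, T1(?p := Sym sym0, ?p + 1 := Blank), ?p)"
    apply (rule run_seq[OF s1])
    apply (rule run_seq[OF s2[unfolded e2]])
    apply (rule run_seq[OF s3])
    apply (rule run_seq[OF s4])
    apply (rule s5)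
    done
  moreover have "(((2 + r) + 1) + (?n1 - r - 1)) + 1 = ?n1 + 3" using r by simp
  moreover have "tm_output (1::nat, T1(?p := Sym sym0, ?p + 1 := Blank), ?p) = [sym0]"
    by (rule out1) (auto simp: is_Sym_def)
  ultimately show ?thesis by metis
qed

lemma final:
  fixes w1 w2 :: "'c::alphabet list"
  shows "\<exists>T p. (tm_step M_eq ^^ (length w1 + 3)) (0, TT w1 w2 (length w1), int (length w1)) = (1, T, p) \<and>
      tm_output (1::nat, T, p) = [if length w2 = length w1 then sym1 else sym0]"
proof -
  let ?n1 = "length w1"
  let ?T = "TT w1 w2 ?n1"
  have s1: "(tm_step M_eq ^^ 1) (0, ?T, int ?n1) = (2, ?T, int ?n1 + 1)"
    by (simp add: tm_step_def TT_def dir_off_def fun_upd_idem_iff)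
  have s2: "(tm_step M_eq ^^ ?n1) (2, ?T, int ?n1 + 1) = (2, ?T, int ?n1 + 1 + int ?n1)"
    by (rule scan_right) (auto simp: TT_def)
  let ?p = "int ?n1 + 1 + int ?n1"
  have c: "?T ?p \<noteq> Aux 0" by (auto simp: TT_def)
  have ss: "(?T ?p = Sep) = (length w2 = ?n1)" by (auto simp: TT_def)
  have s3: "(tm_step M_eq ^^ 2) (2, ?T, ?p) = (1, ?T(?p := Sym (if length w2 = ?n1 then sym1 else sym0), ?p + 1 := Blank), ?p)"
    using decide_2[where T="?T" and p="?p", OF c] ss by simp
  have "(tm_step M_eq ^^ ((2 + ?n1) + 1)) (0, ?T, int ?n1)
       = (1, ?T(?p := Sym (if length w2 = ?n1 then sym1 else sym0), ?p + 1 := Blank), ?p)"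
    apply (rule run_seq[OF s1])
    apply (rule run_seq[OF s2])
    apply (rule s3)
    done
  moreover have "(2 + ?n1) + 1 = ?n1 + 3" by simp
  moreover have "tm_output (1::nat, ?T(?p := Sym (if length w2 = ?n1 then sym1 else sym0), ?p + 1 := Blank), ?p)
     = [if length w2 = ?n1 then sym1 else sym0]"
    by (rule out1) (auto simp: is_Sym_def)
  ultimately show ?thesis by metis
qed

lemma eq_run:
  fixes w1 w2 :: "'c::alphabet list"
  shows "r \<le> length w1 \<Longrightarrow> (\<forall>j<r. j < length w2 \<and> w1 ! j = w2 ! j) \<Longrightarrow>
    \<exists>t T p. t \<le> (length w1 - r) * (2 * length w1 + 3) + length w1 + 3 \<and>
      (tm_step M_eq ^^ t) (0, TT w1 w2 r, int r) = (1, T, p) \<and>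
      tm_output (1::nat, T, p) = bw (w1 = w2)"
proof (induction "length w1 - r" arbitrary: r)
  case 0
  then have r: "r = length w1" by simp
  have eqv: "(w1 = w2) = (length w2 = length w1)"
  proof
    assume "length w2 = length w1"
    then show "w1 = w2" using 0 r by (intro nth_equalityI) auto
  qed simp
  obtain T p where "(tm_step M_eq ^^ (length w1 + 3)) (0, TT w1 w2 (length w1), int (length w1)) = (1, T, p)"
     "tm_output (1::nat, T, p) = [if length w2 = length w1 then sym1 else sym0]"
    using final[of w1 w2] by blast
  then show ?case using r eqv by (intro exI[of _ "length w1 + 3"]) (auto simp: bw_def)
next
  case (Suc d)
  then have r: "r < length w1" by simp
  show ?case
  proof (cases "r < length w2 \<and> w1 ! r = w2 ! r")
    case True
    have d: "d = length w1 - Suc r" using Suc by simp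
    have pre: "\<forall>j<Suc r. j < length w2 \<and> w1 ! j = w2 ! j" using Suc.prems True less_Suc_eq by auto
    obtain t T p where t: "t \<le> (length w1 - Suc r) * (2 * length w1 + 3) + length w1 + 3"
      "(tm_step M_eq ^^ t) (0, TT w1 w2 (Suc r), int (Suc r)) = (1, T, p)"
      "tm_output (1::nat, T, p) = bw (w1 = w2)"
      using Suc.hyps(1)[OF d] r pre by force
    have "(tm_step M_eq ^^ (t + (2 * length w1 + 3))) (0, TT w1 w2 r, int r) = (1, T, p)"
      by (rule run_seq[OF round[OF r True[THEN conjunct1] True[THEN conjunct2]] t(2)])
    moreover have "t + (2 * length w1 + 3) \<le> (length w1 - r) * (2 * length w1 + 3) + length w1 + 3"
    proof -
      have "length w1 - r = Suc (length w1 - Suc r)" using r by simp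
      then show ?thesis using t(1) by simp
    qed
    ultimately show ?thesis using t(3) by blast
  next
    case False
    have ne: "w1 \<noteq> w2" using False r by auto
    obtain T p where "(tm_step M_eq ^^ (length w1 + 3)) (0, TT w1 w2 r, int r) = (1, T, p)"
      "tm_output (1::nat, T, p) = [sym0]"
      using mismatch[OF r False] by blast
    then show ?thesis using ne by (intro exI[of _ "length w1 + 3"]) (auto simp: bw_def)
  qed
qed

lemma ptc_eq: "poly_time_computable (op_ar op_eq) (op_sem (op_eq::'c::alphabet operator))"
  unfolding poly_time_computable_def
proof (rule exI[of _ M_eq], rule exI[of _ "[:3, 4, 2:]"], intro conjI allI impI)
  show "tm_wf (M_eq :: 'c tm)" by (rule M_eq_wf)
  fix ws :: "'c list list" assume "length ws = op_ar op_eq"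
  then obtain w1 w2 where ws: "ws = [w1, w2]"
    by (auto simp: op_eq_def length_Suc_conv numeral_2_eq_2)
  obtain t T p where t: "t \<le> (length w1 - 0) * (2 * length w1 + 3) + length w1 + 3"
      "(tm_step M_eq ^^ t) (0, TT w1 w2 0, int 0) = (1, T, p)"
      "tm_output (1::nat, T, p) = bw (w1 = w2)"
    using eq_run[of 0 w1 w2] by auto
  have b: "t \<le> poly [:3, 4, 2:] (sum_list (map length ws))"
  proof -
    let ?n = "length w1 + length w2"
    have "t \<le> length w1 * (2 * length w1 + 3) + length w1 + 3" using t(1) by simp
    also have "\<dots> \<le> ?n * (2 * ?n + 3) + ?n + 3" by (intro add_mono mult_mono) auto
    also have "\<dots> = poly [:3, 4, 2:] ?n" by (simp add: algebra_simps)
    finally show ?thesis by (simp add: ws)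
  qed
  show "\<exists>t. t \<le> poly [:3, 4, 2:] (sum_list (map length ws)) \<and>
           fst ((tm_step M_eq ^^ t) (tm_init ws)) = 1 \<and>
           tm_output ((tm_step M_eq ^^ t) (tm_init ws)) = op_sem op_eq ws"
    using t b by (intro exI[of _ t]) (simp add: ws init_TT op_eq_def)
qed


abbreviation cfg :: "'c::alphabet tm \<Rightarrow> 'c word list \<Rightarrow> nat \<Rightarrow> 'c tconf" where
  "cfg M ws j \<equiv> (tm_step M ^^ j) (tm_init ws)"

lemma sim_run:
  assumes wf: "tm_wf M" and sr0: "SR M (cfg M ws 0) \<mu> n"
  shows "j \<le> t0 \<Longrightarrow> (\<forall>i<t0. fst (cfg M ws i) \<noteq> 1) \<Longrightarrow>
    SR M (cfg M ws j) ((stepS M k ^^ j) \<mu>) (n + 2 * j) \<and>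
    (\<forall>x. x \<notin> {0, 1, 2, 3} \<longrightarrow> (stepS M k ^^ j) \<mu> x = \<mu> x)"
proof (induction j)
  case 0 then show ?case using sr0 by simp
next
  case (Suc j)
  obtain q tp h where c: "cfg M ws j = (q, tp, h)" by (cases "cfg M ws j") auto
  have q1: "q \<noteq> 1" using Suc.prems c by (metis Suc_le_lessD fst_conv)
  have ih: "SR M (q, tp, h) ((stepS M k ^^ j) \<mu>) (n + 2 * j)"
    "\<forall>x. x \<notin> {0, 1, 2, 3} \<longrightarrow> (stepS M k ^^ j) \<mu> x = \<mu> x"
    using Suc c by auto
  note st = sim_step[OF wf ih(1) q1, of k]
  have "cfg M ws (Suc j) = tm_step M (q, tp, h)" using c by simp
  moreover have "(stepS M k ^^ Suc j) \<mu> = stepS M k ((stepS M k ^^ j) \<mu>)" by simp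
  ultimately show ?case using st ih(2) by (simp add: add.assoc)
qed

lemma tm_input_valid: "set (tm_input ws) \<subseteq> set (syms M)"
  by (auto simp: tm_input_def syms_def)

lemma length_tm_input: "length (tm_input ws) = sum_list (map length ws) + length ws"
  by (induction ws) (auto simp: tm_input_def)

lemma SR_init:
  assumes wf: "tm_wf M" and m: "\<mu> 0 = replicate 2 sym1" "\<mu> 1 = []" "\<mu> 2 = []" "\<mu> 3 = encl (tm_input ws)"
  shows "SR M (tm_init ws) \<mu> (length (tm_input ws))"
  unfolding SR_def tm_init_def
proof (simp only: prod.case, intro conjI exI)
  show "\<mu> 0 = replicate 2 sym1" "\<mu> 1 = replicate 0 sym1" "\<mu> 2 = encl []" "\<mu> 3 = encl (tm_input ws)"
    using m by auto
  show "0 < tm_nstates M" using wf by (simp add: tm_wf_def)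
  show "set [] \<subseteq> set (syms M)" "set (tm_input ws) \<subseteq> set (syms M)" using tm_input_valid by auto
  show "\<forall>i. (\<lambda>i. if 0 \<le> i \<and> i < int (length (tm_input ws)) then tm_input ws ! nat i else Blank) (0 + int i)
     = nthB (tm_input ws) i" by (simp add: nthB_def)
  show "\<forall>i. (\<lambda>i. if 0 \<le> i \<and> i < int (length (tm_input ws)) then tm_input ws ! nat i else Blank) (0 - 1 - int i)
     = nthB [] i" by (simp add: nthB_def)
  show "length [] + length (tm_input ws) \<le> length (tm_input ws)" by simp
qed

lemma output_rs:
  assumes "\<forall>i. tp (h + int i) = nthB rs i"
  shows "tm_output (q, tp, h) = map the_Sym (takeWhile is_Sym rs)"
proof (rule tm_output_eq)
  let ?tw = "takeWhile is_Sym rs"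
  fix i assume i: "i < length (map the_Sym ?tw)"
  then have "i < length ?tw" by simp
  then have "rs ! i = ?tw ! i" "is_Sym (?tw ! i)" "i < length rs"
    using nth_mem[of i ?tw] set_takeWhileD[of "?tw ! i" is_Sym rs] length_takeWhile_le[of is_Sym rs]
    by (auto simp: takeWhile_nth)
  then show "tp (h + int i) = Sym (map the_Sym ?tw ! i)"
    using assms \<open>i < length ?tw\<close> by (auto simp: nthB_def the_Sym_def is_Sym_def split: tsym.splits)
next
  let ?tw = "takeWhile is_Sym rs"
  show "\<not> is_Sym (tp (h + int (length (map the_Sym ?tw))))"
  proof (cases "length ?tw < length rs")
    case True
    then have "\<not> is_Sym (rs ! length ?tw)" by (rule nth_length_takeWhile)
    then show ?thesis using assms True by (simp add: nthB_def)
  next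
    case False
    then show ?thesis using assms length_takeWhile_le[of is_Sym rs] by (simp add: nthB_def is_Sym_def)
  qed
qed


lemma fpa: "(f ^^ (a + b)) x = (f ^^ a) ((f ^^ b) x)" by (simp add: funpow_add)

lemma sum_two: "(\<Sum>j<length ws. length (ws ! j) + 2) = sum_list (map length ws) + 2 * length ws"
proof -
  have "(\<Sum>j<length ws. length (ws ! j) + 2) = (\<Sum>j<length ws. length (ws ! j)) + 2 * length ws"
    by (subst sum.distrib) simp
  also have "(\<Sum>j<length ws. length (ws ! j)) = sum_list (map length ws)"
    by (simp add: sum_list_sum_nth atLeast0LessThan)
  finally show ?thesis .
qed

lemma macro:
  fixes M :: "'c::alphabet tm"
  assumes wf: "tm_wf M" and k: "length ws = k"
    and init: "\<And>x. x < 10 \<Longrightarrow> \<mu>0 x = []" and inpv: "\<And>j. j < k \<Longrightarrow> \<mu>0 (inp j) = ws ! j"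
    and t: "fst (cfg M ws t) = 1"
  shows "\<exists>m. m \<le> 4 * sum_list (map length ws) + 5 * k + 5 * t + 5 \<and>
     (stepS M k ^^ m) \<mu>0 0 = replicate 5 sym1 \<and> (stepS M k ^^ m) \<mu>0 8 = tm_output (cfg M ws t)"
proof -
  let ?n = "sum_list (map length ws)"
  define t0 where "t0 = (LEAST i. fst (cfg M ws i) = 1)"
  have t0t: "t0 \<le> t" unfolding t0_def by (rule Least_le) (rule t)
  have t0h: "fst (cfg M ws t0) = 1" unfolding t0_def by (rule LeastI) (rule t)
  have t0l: "\<forall>i<t0. fst (cfg M ws i) \<noteq> 1" unfolding t0_def using not_less_Least by blast
  obtain tp h where c0: "cfg M ws t0 = (1, tp, h)" using t0h by (cases "cfg M ws t0") auto
  have ct: "cfg M ws t = cfg M ws t0"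
  proof -
    have "cfg M ws t = (tm_step M ^^ (t - t0)) (cfg M ws t0)"
      using t0t fpa[where f="tm_step M" and a="t - t0" and b=t0 and x="tm_init ws"] by simp
    then show ?thesis using c0 funpow_halt by simp
  qed
  have A0: "Ast ws \<mu>0 0 \<mu>0" using init by (simp add: Ast_def tm_input_0)
  define m0 where "m0 = (\<Sum>j<k. length (ws ! j) + 2) + 1"
  obtain \<mu>A where A: "(stepS M k ^^ m0) \<mu>0 = \<mu>A" "\<mu>A 0 = replicate 1 sym1"
    "\<mu>A 2 = encl (rev (tm_input ws))" "\<forall>x. x \<notin> {0, 2, 4, 5, 6} \<longrightarrow> \<mu>A x = \<mu>0 x"
    using phase0[OF A0 k inpv, of M] unfolding m0_def by blast
  define m1 where "m1 = length (rev (tm_input ws)) + 1"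
  define \<mu>B where "\<mu>B = \<mu>A(0 := replicate 2 sym1, 2 := [], 3 := encl (rev (rev (tm_input ws))) @ \<mu>A 3)"
  have B: "(stepS M k ^^ m1) \<mu>A = \<mu>B"
    unfolding m1_def \<mu>B_def by (rule ph1_run) (use A tm_input_valid in auto)
  have B3: "\<mu>B 3 = encl (tm_input ws)" using A(4) init by (simp add: \<mu>B_def)
  have srB: "SR M (cfg M ws 0) \<mu>B (length (tm_input ws))"
    using SR_init[OF wf, of \<mu>B ws] B3 A(4) init by (simp add: \<mu>B_def)
  define \<mu>C where "\<mu>C = (stepS M k ^^ t0) \<mu>B"
  have C: "SR M (cfg M ws t0) \<mu>C (length (tm_input ws) + 2 * t0)"
    "\<forall>x. x \<notin> {0, 1, 2, 3} \<longrightarrow> \<mu>C x = \<mu>B x"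
    using sim_run[OF wf srB, of t0 t0 k] t0l unfolding \<mu>C_def by auto
  have "\<exists>(ls :: 'c tsym list) rs. \<mu>C 3 = encl rs \<and> (\<forall>i. tp (h + int i) = nthB rs i) \<and>
    length ls + length rs \<le> length (tm_input ws) + 2 * t0"
    using C(1) unfolding c0 SR_def prod.case by blast
  then obtain ls :: "'c tsym list" and rs where rs: "\<mu>C 3 = encl rs" "\<forall>i. tp (h + int i) = nthB rs i"
    "length ls + length rs \<le> length (tm_input ws) + 2 * t0" by blast
  define \<mu>D where "\<mu>D = \<mu>C(0 := replicate 3 sym1)"
  have D: "stepS M k \<mu>C = \<mu>D" unfolding \<mu>D_def using sim_halt[of M tp h \<mu>C] C(1) c0 by simp
  let ?tw = "takeWhile is_Sym rs"
  define \<mu>E where "\<mu>E = \<mu>D(0 := replicate 4 sym1, 3 := encl (dropWhile is_Sym rs),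
      7 := rev (map the_Sym ?tw) @ \<mu>D 7)"
  have E: "(stepS M k ^^ (length ?tw + 1)) \<mu>D = \<mu>E"
    unfolding \<mu>E_def by (rule ph3_run) (use rs in \<open>auto simp: \<mu>D_def\<close>)
  have D78: "\<mu>D 7 = []" "\<mu>D 8 = []" using C(2) A(4) init by (auto simp: \<mu>D_def \<mu>B_def)
  define \<mu>F where "\<mu>F = \<mu>E(0 := replicate 5 sym1, 7 := [], 8 := rev (\<mu>E 7) @ \<mu>E 8)"
  have F: "(stepS M k ^^ (length (\<mu>E 7) + 1)) \<mu>E = \<mu>F"
    unfolding \<mu>F_def by (rule ph4_run) (simp add: \<mu>E_def)
  have F8: "\<mu>F 8 = map the_Sym ?tw" using D78 by (simp add: \<mu>F_def \<mu>E_def)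
  have out: "tm_output (cfg M ws t) = map the_Sym ?tw" using ct c0 output_rs[OF rs(2)] by simp
  define a4 where "a4 = length (\<mu>E 7) + 1"
  define a3 where "a3 = length ?tw + 1"
  define m where "m = a4 + (a3 + (1 + (t0 + (m1 + m0))))"
  have D1: "(stepS M k ^^ 1) \<mu>C = \<mu>D" using D by simp
  have E': "(stepS M k ^^ a3) \<mu>D = \<mu>E" using E by (simp only: a3_def)
  have F': "(stepS M k ^^ a4) \<mu>E = \<mu>F" using F by (simp only: a4_def)
  have run: "(stepS M k ^^ m) \<mu>0 = \<mu>F"
    unfolding m_def fpa by (simp only: A(1) B \<mu>C_def[symmetric] D1 E' F')
  have bound: "m \<le> 4 * ?n + 5 * k + 5 * t + 5"
  proof -
    have "length ?tw \<le> length rs" by (rule length_takeWhile_le)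
    also have "\<dots> \<le> ?n + k + 2 * t0" using rs(3) length_tm_input[of ws] k by simp
    finally have tw: "length ?tw \<le> ?n + k + 2 * t0" .
    have e7: "length (\<mu>E 7) = length ?tw" using D78 by (simp add: \<mu>E_def)
    have "m0 = ?n + 2 * k + 1" unfolding m0_def using sum_two[of ws] k by simp
    moreover have "m1 = ?n + k + 1" unfolding m1_def using length_tm_input[of ws] k by simp
    ultimately show ?thesis unfolding m_def a4_def a3_def e7 using tw t0t by linarith
  qed
  show ?thesis using run bound F8 out by (intro exI[of _ m]) (simp add: \<mu>F_def)
qed


fun REPS :: "nat \<Rightarrow> 'c::alphabet stmt \<Rightarrow> 'c stmt" where
  "REPS 0 B = Skip"
| "REPS (Suc n) B = Seq B (REPS n B)"

lemma sexec_REPS: "sexec \<mu> (REPS n B) = ((\<lambda>\<mu>. sexec \<mu> B) ^^ n) \<mu>"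
  by (induction n arbitrary: \<mu>) (simp_all add: funpow_Suc_right del: funpow.simps)

lemma simple_REPS: "simple B \<Longrightarrow> simple (REPS n B)" by (induction n) auto
lemma mods_REPS: "mods (REPS n B) \<subseteq> mods B" by (induction n) auto

lemma stype_REPS: "stype \<Gamma> \<Delta> ti to B 1 \<Longrightarrow> stype \<Gamma> \<Delta> ti to (REPS n B) 1"
proof (induction n)
  case 0
  have "stype \<Gamma> \<Delta> ti to (Skip :: 'a stmt) 0" by (rule TSkip)
  then show ?case by (auto intro: TSub)
next
  case (Suc n) then show ?case by (auto intro: TSeq)
qed

lemma fixpoint:
  assumes "\<mu> 0 = replicate 5 sym1" shows "(stepS M k ^^ N) \<mu> = \<mu>"
proof (induction N)
  case (Suc N)
  then show ?case using step_ph[of \<mu> 5 M k] assms by simp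
qed simp

lemma foldl_upd_notin: "y \<notin> set xs \<Longrightarrow> foldl (\<lambda>\<mu> (x, w). \<mu>(x := w)) \<mu> (zip xs ws) y = \<mu> y"
proof (induction xs arbitrary: ws \<mu>)
  case (Cons x xs) then show ?case by (cases ws) auto
qed simp

lemma foldl_upd_nth: "distinct xs \<Longrightarrow> length xs = length ws \<Longrightarrow> j < length xs \<Longrightarrow>
   foldl (\<lambda>\<mu> (x, w). \<mu>(x := w)) \<mu> (zip xs ws) (xs ! j) = ws ! j"
proof (induction xs arbitrary: ws \<mu> j)
  case (Cons x xs)
  then obtain w ws' where ws: "ws = w # ws'" by (cases ws) auto
  show ?case
  proof (cases j)
    case 0
    have "foldl (\<lambda>\<mu> (x, w). \<mu>(x := w)) \<mu> (zip (x # xs) ws) ((x # xs) ! j) =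
          foldl (\<lambda>\<mu> (x, w). \<mu>(x := w)) (\<mu>(x := w)) (zip xs ws') x"
      by (simp only: ws zip_Cons_Cons foldl_Cons prod.case 0 nth_Cons_0)
    also have "\<dots> = (\<mu>(x := w)) x" by (rule foldl_upd_notin) (use Cons.prems in simp)
    also have "\<dots> = w" by simp
    finally show ?thesis by (simp only: ws 0 nth_Cons_0)
  next
    case (Suc j') then show ?thesis using Cons ws by simp
  qed
qed simp

lemma init_store_inp:
  assumes "length ws = k"
  shows "\<And>x. x < 10 \<Longrightarrow> init_store (map inp [0..<k]) ws x = ([] :: 'c::alphabet word)"
    "\<And>j. j < k \<Longrightarrow> init_store (map inp [0..<k]) ws (inp j) = ws ! j"
proof -
  fix x :: nat assume "x < 10"
  then have "x \<notin> set (map inp [0..<k])" by (auto simp: inp_def)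
  then show "init_store (map inp [0..<k]) ws x = ([] :: 'c word)"
    unfolding init_store_def using foldl_upd_notin[of x "map inp [0..<k]" store_empty ws]
    by (simp add: store_empty_def)
next
  fix j assume j: "j < k"
  have d: "distinct (map inp [0..<k])" by (simp add: distinct_map inj_on_def inp_def)
  have "init_store (map inp [0..<k]) ws (map inp [0..<k] ! j) = ws ! j"
    unfolding init_store_def by (rule foldl_upd_nth) (use d j assms in auto)
  then show "init_store (map inp [0..<k]) ws (inp j) = ws ! j" using j by simp
qed

lemma poly_bound: "poly p (x::nat) \<le> poly p 1 * (x + 1) ^ degree p"
proof -
  have "poly p x = (\<Sum>i\<le>degree p. coeff p i * x ^ i)" by (rule poly_altdef)
  also have "\<dots> \<le> (\<Sum>i\<le>degree p. coeff p i * (x + 1) ^ degree p)"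
  proof (rule sum_mono)
    fix i assume "i \<in> {..degree p}"
    then have i: "i \<le> degree p" by simp
    have "x ^ i \<le> (x + 1) ^ i" by (rule power_mono) auto
    also have "\<dots> \<le> (x + 1) ^ degree p" by (rule power_increasing[OF i]) simp
    finally have "x ^ i \<le> (x + 1) ^ degree p" .
    then show "coeff p i * x ^ i \<le> coeff p i * (x + 1) ^ degree p" by simp
  qed
  also have "\<dots> = (\<Sum>i\<le>degree p. coeff p i) * (x + 1) ^ degree p" by (simp add: sum_distrib_right)
  also have "(\<Sum>i\<le>degree p. coeff p i) = poly p 1" by (simp add: poly_altdef)
  finally show ?thesis .
qed

lemma prod_ge: "Suc (sum_list (map length ws)) \<le> prod_list (map (\<lambda>w. Suc (length w)) ws)"
proof (induction ws)
  case (Cons w ws)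
  let ?P = "prod_list (map (\<lambda>w. Suc (length w)) ws)"
  have P1: "1 \<le> ?P" using Cons by simp
  have "length w \<le> length w * ?P" using P1 by simp
  then have "Suc (length w + sum_list (map length ws)) \<le> ?P + length w * ?P"
    using Cons by linarith
  then show ?case by simp
qed simp

lemma prod_concat_replicate:
  "prod_list (map g (concat (replicate D xs))) = prod_list (map g xs) ^ D"
  by (induction D) auto

lemma no_while_simple: "simple s \<Longrightarrow> While e b \<notin> subs s"
  by (induction s) auto

lemma goodW_nest:
  fixes S :: "'c::alphabet stmt"
  assumes "simple S" "inj cv" "inj dv" "\<And>l l'. cv l \<noteq> dv l'"
    "mods S \<inter> (range cv \<union> range dv) = {}"
  shows "goodW (nest cv dv inp js S)"
proof (induction js)
  case Nil then show ?case unfolding goodW_def using no_while_simple[OF assms(1)] by simp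
next
  case (Cons i js)
  let ?l = "length js"
  let ?S' = "nest cv dv inp js S"
  have mn: "cv ?l \<notin> mods ?S'" "dv ?l \<notin> mods ?S'"
  proof -
    have "cv ?l \<notin> cv ` {..<?l}" "dv ?l \<notin> dv ` {..<?l}" "cv ?l \<notin> dv ` {..<?l}" "dv ?l \<notin> cv ` {..<?l}"
      using assms(2,3,4) by (auto dest: injD) (metis assms(4))
    moreover have "cv ?l \<notin> mods S" "dv ?l \<notin> mods S" using assms(5) by blast+
    ultimately show "cv ?l \<notin> mods ?S'" "dv ?l \<notin> mods ?S'"
      using mods_nest[of cv dv inp js S] by auto
  qed
  have upd: "While e b \<notin> subs (UPD c d :: 'c stmt)" for e b c d by (simp add: UPD_def)
  show ?case unfolding goodW_def
  proof (intro allI impI)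
    fix e b assume w: "While e b \<in> subs (nest cv dv inp (i # js) S)"
    then have "While e b = loopc (cv ?l) (dv ?l) ?S' \<or> While e b \<in> subs ?S'"
      using upd by (auto simp: loopc_def)
    then show "\<exists>c d S. c \<noteq> d \<and> c \<notin> mods S \<and> d \<notin> mods S \<and> While e b = loopc c d S"
      using Cons mn assms(4) unfolding goodW_def by blast
  qed
qed

definition cvk :: "nat \<Rightarrow> nat \<Rightarrow> var" where "cvk k l = 10 + k + 2 * l"
definition dvk :: "nat \<Rightarrow> nat \<Rightarrow> var" where "dvk k l = 11 + k + 2 * l"

lemma cvk_dvk: "inj (cvk k)" "inj (dvk k)" "cvk k l \<noteq> dvk k l'"
  by (auto simp: cvk_def dvk_def inj_on_def) presburger

definition PROG :: "'c::alphabet tm \<Rightarrow> nat \<Rightarrow> nat poly \<Rightarrow> 'c prog" where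
  "PROG M k p = \<lparr>params = map inp [0..<k],
     body = nest (cvk k) (dvk k) inp (concat (replicate (Suc (degree p)) [0..<k]))
               (REPS (5 * (k + poly p 1 + 2)) (BODY M k)),
     ret = 8\<rparr>"


lemma Used_ptc: "op \<in> (Used :: 'c::alphabet operator set) \<Longrightarrow> poly_time_computable (op_ar op) (op_sem op)"
  unfolding Used_def using ptc_zero ptc_tail ptc_head ptc_eq ptc_cons by auto

lemma stepS_inp: "stepS M k \<mu> (inp j) = \<mu> (inp j)"
proof -
  have "mods (BODY M k) \<subseteq> {..<10}" using good_BODY[of k "10 + k" M] by (simp add: good_def)
  then have "inp j \<notin> mods (BODY M k)" by (auto simp: inp_def)
  then show ?thesis unfolding stepS_def by (rule sexec_frame)
qed

lemma bound_arith:
  fixes n k S t :: nat and X :: nat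
  assumes X: "1 \<le> X" and t: "t \<le> S * X"
  shows "4 * n + 5 * k + 5 * t + 5 \<le> 5 * (k + S + 2) * ((n + 1) * X)"
proof -
  have a: "k \<le> k * ((n + 1) * X)" using X by simp
  have b: "S * X \<le> S * ((n + 1) * X)" by simp
  have c: "n + 1 \<le> (n + 1) * X" using mult_le_mono2[OF X, of "n + 1"] by simp
  have "5 * (k + S + 2) * ((n + 1) * X) = 5 * (k * ((n + 1) * X)) + 5 * (S * ((n + 1) * X)) + 10 * ((n + 1) * X)"
    by (simp add: algebra_simps)
  then show ?thesis using a b c t by linarith
qed

theorem mainTheorem1:
  fixes Ops :: "'c::alphabet operator set"
  assumes "required_ops \<subseteq> Ops"
  shows "\<forall>k f. (k, f) \<in> FP \<longrightarrow>
           (\<exists>P :: 'c prog. length (params P) = k \<and> distinct (params P) \<and>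
              safe_prog Ops P \<and> aperiodic P \<and>
              (\<forall>ws. length ws = k \<longrightarrow> prog_computes P ws (f ws)))"
proof (intro allI impI)
  fix k and f :: "'c word list \<Rightarrow> 'c word"
  assume "(k, f) \<in> FP"
  then obtain M :: "'c tm" and p :: "nat poly" where wf: "tm_wf M" and
    run: "\<And>ws. length ws = k \<Longrightarrow> \<exists>t. t \<le> poly p (sum_list (map length ws)) \<and>
           fst ((tm_step M ^^ t) (tm_init ws)) = 1 \<and> tm_output ((tm_step M ^^ t) (tm_init ws)) = f ws"
    unfolding FP_def poly_time_computable_def by auto
  define D where "D = Suc (degree p)"
  define R where "R = 5 * (k + poly p 1 + 2)"
  define js where "js = concat (replicate D [0..<k])"
  define P where "P = PROG M k p"
  define C where "C = {x. 10 + k \<le> x}"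
  have Pbody: "body P = nest (cvk k) (dvk k) inp js (REPS R (BODY M k))"
    by (simp add: P_def PROG_def js_def D_def R_def)
  have gB: "good (Gam k (10 + k + 2 * length js)) k (BODY M k)" by (rule good_BODY) simp
  have simpleB: "simple (BODY M k)" and svB: "svars (BODY M k) \<subseteq> {..<10 + k}"
    and mB: "mods (BODY M k) \<subseteq> {..<10}"
    using good_BODY[of k "10 + k" M] by (auto simp: good_def)
  have js_k: "j \<in> set js \<Longrightarrow> j < k" for j by (auto simp: js_def split: if_splits)
  have p1: "length (params P) = k" "distinct (params P)"
    by (auto simp: P_def PROG_def distinct_map inj_on_def inp_def)
  have safe: "safe_prog Ops P"
    unfolding safe_prog_def
  proof (intro exI conjI)
    show "safe_env Ops (Dlt :: 'c op_env)" by (rule safe_Dlt[OF assms Used_ptc])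
    show "finite (dom (Gam k (10 + k + 2 * length js)))"
      by (rule finite_subset[of _ "{..<10 + k + 2 * length js}"]) (auto simp: Gam_def split: if_splits)
    show "stype (Gam k (10 + k + 2 * length js)) Dlt 0 0 (body P) 1"
      unfolding Pbody
    proof (rule stype_nest)
      fix l assume "l < length js"
      then show "Gam k (10 + k + 2 * length js) (cvk k l) = Some 1 \<and> Gam k (10 + k + 2 * length js) (dvk k l) = Some 1"
        by (simp add: Gam_def cvk_def dvk_def)
    next
      fix j assume "j \<in> set js"
      then have "j < k" by (rule js_k)
      then show "Gam k (10 + k + 2 * length js) (inp j) = Some 1" by (simp add: Gam_def inp_def)
    next
      fix t :: nat assume "t \<le> 1"
      show "stype (Gam k (10 + k + 2 * length js)) Dlt t t (REPS R (BODY M k)) 1"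
        by (rule stype_REPS) (rule wfs_stype, use gB in \<open>simp add: good_def\<close>)
    qed simp
  qed
  have aper: "aperiodic P"
  proof (rule goodW_aperiodic)
    have "mods (REPS R (BODY M k)) \<inter> (range (cvk k) \<union> range (dvk k)) = {}"
      using mods_REPS[of R "BODY M k"] mB by (auto simp: cvk_def dvk_def)
    then show "goodW (body P)" unfolding Pbody
      by (intro goodW_nest simple_REPS simpleB cvk_dvk)
  qed
  have comp: "prog_computes P ws (f ws)" if ws: "length ws = k" for ws
  proof -
    define \<mu>0 where "\<mu>0 = init_store (params P) ws"
    have \<mu>0: "\<And>x. x < 10 \<Longrightarrow> \<mu>0 x = []" "\<And>j. j < k \<Longrightarrow> \<mu>0 (inp j) = ws ! j"
      using init_store_inp[OF ws] by (auto simp: \<mu>0_def P_def PROG_def)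
    have Fresp: "eq_off C a b \<Longrightarrow> eq_off C (stepS M k a) (stepS M k b)" for a b
      unfolding stepS_def by (rule sexec_agree) (use svB in \<open>auto simp: C_def\<close>)
    have S: "\<exists>\<mu>'. eval_s \<mu> (REPS R (BODY M k)) True \<mu>' \<and> eq_off C \<mu>' ((stepS M k ^^ R) \<mu>)" for \<mu>
    proof -
      have "eval_s \<mu> (REPS R (BODY M k)) True (sexec \<mu> (REPS R (BODY M k)))"
        by (rule sexec_sound) (rule simple_REPS[OF simpleB])
      moreover have "sexec \<mu> (REPS R (BODY M k)) = (stepS M k ^^ R) \<mu>"
        by (simp add: sexec_REPS stepS_def[abs_def])
      ultimately show ?thesis by auto
    qed
    obtain \<mu>' where ev: "eval_s \<mu>0 (nest (cvk k) (dvk k) inp js (REPS R (BODY M k))) True \<mu>'"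
      and off: "eq_off C \<mu>' ((stepS M k ^^ (R * prod_list (map (\<lambda>j. Suc (length (\<mu>0 (inp j)))) js))) \<mu>0)"
    proof -
      have "\<exists>\<mu>'. eval_s \<mu>0 (nest (cvk k) (dvk k) inp js (REPS R (BODY M k))) True \<mu>' \<and>
           eq_off C \<mu>' ((stepS M k ^^ (R * prod_list (map (\<lambda>j. Suc (length (\<mu>0 (inp j)))) js))) \<mu>0)"
      proof (rule nest_impl)
        show "range (cvk k) \<subseteq> C" "range (dvk k) \<subseteq> C" by (auto simp: C_def cvk_def dvk_def)
        show "inj (cvk k)" "inj (dvk k)" "\<And>l l'. cvk k l \<noteq> dvk k l'" by (rule cvk_dvk)+
        show "\<And>j. j \<in> set js \<Longrightarrow> inp j \<notin> C" by (auto simp: C_def inp_def dest: js_k)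
        show "mods (REPS R (BODY M k)) \<inter> C = {}" using mods_REPS[of R "BODY M k"] mB by (auto simp: C_def)
        show "\<And>\<mu>. \<exists>\<mu>'. eval_s \<mu> (REPS R (BODY M k)) True \<mu>' \<and> eq_off C \<mu>' ((stepS M k ^^ R) \<mu>)" by (rule S)
        show "\<And>a b. eq_off C a b \<Longrightarrow> eq_off C (stepS M k a) (stepS M k b)" by (rule Fresp)
        show "\<And>\<mu> j. j \<in> set js \<Longrightarrow> stepS M k \<mu> (inp j) = \<mu> (inp j)" by (rule stepS_inp)
      qed
      then show ?thesis using that by blast
    qed
    let ?n = "sum_list (map length ws)"
    define N where "N = R * prod_list (map (\<lambda>j. Suc (length (\<mu>0 (inp j)))) js)"
    obtain t where t: "t \<le> poly p ?n" "fst (cfg M ws t) = 1" "tm_output (cfg M ws t) = f ws"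
      using run[OF ws] by blast
    obtain m where m: "m \<le> 4 * ?n + 5 * k + 5 * t + 5" "(stepS M k ^^ m) \<mu>0 0 = replicate 5 sym1"
      "(stepS M k ^^ m) \<mu>0 8 = tm_output (cfg M ws t)"
      using macro[OF wf ws \<mu>0 t(2)] by blast
    have mN: "m \<le> N"
    proof -
      have e1: "map (\<lambda>j. Suc (length (\<mu>0 (inp j)))) [0..<k] = map (\<lambda>w. Suc (length w)) ws"
        using \<mu>0(2) ws by (auto intro!: nth_equalityI)
      have "N = R * prod_list (map (\<lambda>w. Suc (length w)) ws) ^ D"
        unfolding N_def js_def prod_concat_replicate e1 ..
      moreover have "(?n + 1) ^ D \<le> prod_list (map (\<lambda>w. Suc (length w)) ws) ^ D"
        using prod_ge[of ws] by (intro power_mono) auto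
      ultimately have N1: "R * (?n + 1) ^ D \<le> N" by simp
      have X: "1 \<le> (?n + 1) ^ degree p" by simp
      have tX: "t \<le> poly p 1 * (?n + 1) ^ degree p" using t(1) poly_bound[of p ?n] by linarith
      have "m \<le> 5 * (k + poly p 1 + 2) * ((?n + 1) * (?n + 1) ^ degree p)"
        using m(1) bound_arith[OF X tX, of ?n k] by linarith
      also have "\<dots> = R * (?n + 1) ^ D" by (simp add: R_def D_def)
      finally show ?thesis using N1 by linarith
    qed
    have fin: "(stepS M k ^^ N) \<mu>0 = (stepS M k ^^ m) \<mu>0"
    proof -
      have "(stepS M k ^^ N) \<mu>0 = (stepS M k ^^ (N - m)) ((stepS M k ^^ m) \<mu>0)"
        using mN by (simp add: fpa[symmetric])
      also have "\<dots> = (stepS M k ^^ m) \<mu>0" by (rule fixpoint[where \<mu>="(stepS M k ^^ m) \<mu>0", OF m(2)])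
      finally show ?thesis .
    qed
    have "\<mu>' 8 = (stepS M k ^^ N) \<mu>0 8" using off unfolding N_def eq_off_def C_def by simp
    then have "\<mu>' (ret P) = f ws" using fin m(3) t(3) by (simp add: P_def PROG_def)
    then show ?thesis unfolding prog_computes_def using ev Pbody \<mu>0_def by auto
  qed
  show "\<exists>P :: 'c prog. length (params P) = k \<and> distinct (params P) \<and>
              safe_prog Ops P \<and> aperiodic P \<and>
              (\<forall>ws. length ws = k \<longrightarrow> prog_computes P ws (f ws))"
    using p1 safe aper comp by blast
qed


end
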